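(* Let $\mathscr C$ be a class of graphs with sub-exponential expansion. Then for every integer $p\ge 2$ there exists an integer $g_p$ such that every graph $G\in\mathscr C$ with $\mathrm{girth}(G)\ge g_p$ is $p$-path degenerate.
   Context: Graphs are finite and simple; the girth of a graph is the length of a shortest cycle ($+\infty$ for a forest). A strict ear of a graph $G$ is a path of $G$ whose internal vertices all have degree $2$ in $G$ and whose two endpoints are distinct. For an integer $p\ge1$, a $p$-reduction of $G$ is the deletion of either an isolated vertex, or a vertex of degree $1$, or the internal vertices of a strict ear of $G$ of length at least $p$. A graph is $p$-path degenerate if it can be reduced to the empty graph (no vertices) by a sequence of $p$-reductions. For a half-integer $r\ge0$ ($r\in\frac12\mathbb N$), a graph $H$ is a shallow minor of $G$ at depth $r$ if to every $v\in V(H)$ one can associate a rooted tree $(T_v,r_v)$ such that the $T_v$ are vertex-disjoint subgraphs of $G$, each $T_v$ has radius at most $\lceil r\rceil$ (every path of $T_v$ starting at $r_v$ has length at most $\lceil r\rceil$), and for every edge $uv\in E(H)$ there is an edge $e$ of $G$ between $T_u$ and $T_v$ such that the path between $r_u$ and $r_v$ in $T_u\cup T_v\cup\{e\}$ has length at most $2r+1$. $\nabla_r(G)$ is the maximum of $|E(H)|/|V(H)|$ over nonempty shallow minors $H$ of $G$ at depth $r$. The expansion of a class $\mathscr C$ is $\mathrm{Exp}_{\mathscr C}(r)=\sup\{\nabla_r(G):G\in\mathscr C\}$ for $r\in\frac12\mathbb N$. The class has sub-exponential expansion if $\mathrm{Exp}_{\mathscr C}(r)=2^{o(r)}$ (in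 particular it is finite for every $r$). *)

theory Defs
  imports Complex_Main "HOL-Library.Extended_Nat"
begin

type_synonym 'a graph = "'a set \<times> 'a set set"

definition wf_graph :: "'a graph \<Rightarrow> bool" where
  "wf_graph G \<longleftrightarrow> finite (fst G) \<and>
     (\<forall>e\<in>snd G. \<exists>x y. x \<in> fst G \<and> y \<in> fst G \<and> x \<noteq> y \<and> e = {x, y})"

definition degree :: "'a graph \<Rightarrow> 'a \<Rightarrow> nat" where
  "degree G v = card {e \<in> snd G. v \<in> e}"

text \<open>A path of G given by its list of (distinct) vertices; its length is length xs - 1.\<close>
definition is_path :: "'a graph \<Rightarrow> 'a list \<Rightarrow> bool" where
  "is_path G xs \<longleftrightarrow> xs \<noteq> [] \<and> distinct xs \<and> set xs \<subseteq> fst G \<and>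
     (\<forall>i. Suc i < length xs \<longrightarrow> {xs ! i, xs ! Suc i} \<in> snd G)"

definition is_cycle :: "'a graph \<Rightarrow> 'a list \<Rightarrow> bool" where
  "is_cycle G xs \<longleftrightarrow> length xs \<ge> 3 \<and> is_path G xs \<and> {last xs, hd xs} \<in> snd G"

definition girth :: "'a graph \<Rightarrow> enat" where
  "girth G = (if \<exists>xs. is_cycle G xs
              then enat (LEAST n. \<exists>xs. is_cycle G xs \<and> length xs = n) else \<infinity>)"

definition subgraph :: "'a graph \<Rightarrow> 'a graph \<Rightarrow> bool" where
  "subgraph T G \<longleftrightarrow> wf_graph T \<and> fst T \<subseteq> fst G \<and> snd T \<subseteq> snd G"

definition connected_graph :: "'a graph \<Rightarrow> bool" where
  "connected_graph T \<longleftrightarrow>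
     (\<forall>x\<in>fst T. \<forall>y\<in>fst T. \<exists>xs. is_path T xs \<and> hd xs = x \<and> last xs = y)"

definition is_tree :: "'a graph \<Rightarrow> bool" where
  "is_tree T \<longleftrightarrow> fst T \<noteq> {} \<and> connected_graph T \<and> \<not> (\<exists>xs. is_cycle T xs)"

text \<open>Shallow minor at depth r = k/2 (k :: nat encodes the half-integer r).
  Each vertex v of H is identified with the root r_v of its tree T v, so V(H) \<subseteq> V(G);
  ceil r = (k+1) div 2 and 2r+1 = k+1.\<close>
definition shallow_minor :: "nat \<Rightarrow> 'a graph \<Rightarrow> 'a graph \<Rightarrow> bool" where
  "shallow_minor k G H \<longleftrightarrow> wf_graph H \<and> fst H \<subseteq> fst G \<and>
    (\<exists>T :: 'a \<Rightarrow> 'a graph.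
      (\<forall>v\<in>fst H. subgraph (T v) G \<and> is_tree (T v) \<and> v \<in> fst (T v) \<and>
          (\<forall>xs. is_path (T v) xs \<and> hd xs = v \<longrightarrow> length xs - 1 \<le> (k + 1) div 2)) \<and>
      (\<forall>u\<in>fst H. \<forall>v\<in>fst H. u \<noteq> v \<longrightarrow> fst (T u) \<inter> fst (T v) = {}) \<and>
      (\<forall>u v. {u, v} \<in> snd H \<longrightarrow>
         (\<exists>x y. x \<in> fst (T u) \<and> y \<in> fst (T v) \<and> {x, y} \<in> snd G \<and>
            (\<exists>xs. is_path (fst (T u) \<union> fst (T v), snd (T u) \<union> snd (T v) \<union> {{x, y}}) xs
                  \<and> hd xs = u \<and> last xs = v \<and> length xs - 1 \<le> k + 1))))"

text \<open>nabla k G = \<nabla>_{k/2}(G): maximum of |E(H)|/|V(H)| over nonempty shallow minors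
  (0 is inserted only to make the value defined for the empty graph; all ratios are \<ge> 0).\<close>
definition nabla :: "nat \<Rightarrow> 'a graph \<Rightarrow> real" where
  "nabla k G = Sup (insert 0 {real (card (snd H)) / real (card (fst H)) | H.
                     shallow_minor k G H \<and> fst H \<noteq> {}})"

text \<open>Sub-exponential expansion: Exp(r) finite for every r and Exp(r) = 2^{o(r)},
  i.e. for every eps > 0, eventually Exp(r) \<le> 2^(eps r); here r = k/2.\<close>
definition subexp_expansion :: "'a graph set \<Rightarrow> bool" where
  "subexp_expansion C \<longleftrightarrow>
     (\<forall>k. \<exists>B. \<forall>G\<in>C. nabla k G \<le> B) \<and>
     (\<forall>\<epsilon>>0. \<exists>N. \<forall>k\<ge>N. \<forall>G\<in>C. nabla k G \<le> 2 powr (\<epsilon> * (real k / 2)))"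

definition p_reduction :: "nat \<Rightarrow> 'a graph \<Rightarrow> 'a graph \<Rightarrow> bool" where
  "p_reduction p G G' \<longleftrightarrow>
     (\<exists>v\<in>fst G. degree G v = 0 \<and> G' = (fst G - {v}, snd G)) \<or>
     (\<exists>v\<in>fst G. degree G v = 1 \<and> G' = (fst G - {v}, {e \<in> snd G. v \<notin> e})) \<or>
     (\<exists>xs. is_path G xs \<and> hd xs \<noteq> last xs \<and> length xs - 1 \<ge> p \<and>
        (\<forall>x\<in>set (butlast (tl xs)). degree G x = 2) \<and>
        G' = (fst G - set (butlast (tl xs)), {e \<in> snd G. e \<inter> set (butlast (tl xs)) = {}}))"

inductive path_degenerate :: "nat \<Rightarrow> 'a graph \<Rightarrow> bool" for p :: nat where
  empty: "path_degenerate p ({}, {})"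
| step: "p_reduction p G G' \<Longrightarrow> path_degenerate p G' \<Longrightarrow> path_degenerate p G"

end

theory Submission
  imports Defs
begin


fun wk :: "'a set set \<Rightarrow> 'a list \<Rightarrow> bool" where
  "wk F [] = True"
| "wk F [x] = True"
| "wk F (x # y # xs) = ({x, y} \<in> F \<and> wk F (y # xs))"

lemma wk_nth: "wk F xs \<longleftrightarrow> (\<forall>i. Suc i < length xs \<longrightarrow> {xs ! i, xs ! Suc i} \<in> F)"
proof (induction F xs rule: wk.induct)
  case (3 F x y xs)
  show ?case
  proof
    assume "wk F (x # y # xs)"
    then show "\<forall>i. Suc i < length (x # y # xs) \<longrightarrow> {(x # y # xs) ! i, (x # y # xs) ! Suc i} \<in> F"
      using 3 by (auto simp: nth_Cons split: nat.splits)
  next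
    assume h: "\<forall>i. Suc i < length (x # y # xs) \<longrightarrow> {(x # y # xs) ! i, (x # y # xs) ! Suc i} \<in> F"
    have "{x,y} \<in> F" using h[rule_format, of 0] by simp
    moreover have "\<forall>i. Suc i < length (y # xs) \<longrightarrow> {(y # xs) ! i, (y # xs) ! Suc i} \<in> F"
      using h[rule_format, of "Suc _"] by auto
    ultimately show "wk F (x # y # xs)" using 3 by simp
  qed
qed auto

lemma is_path_wk: "is_path G xs \<longleftrightarrow> xs \<noteq> [] \<and> distinct xs \<and> set xs \<subseteq> fst G \<and> wk (snd G) xs"
  unfolding is_path_def wk_nth by simp

lemma wk_append: "wk F (xs @ ys) \<longleftrightarrow> wk F xs \<and> wk F ys \<and> (xs \<noteq> [] \<and> ys \<noteq> [] \<longrightarrow> {last xs, hd ys} \<in> F)"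
proof (induction xs rule: wk.induct)
  case (2 F x)
  then show ?case by (cases ys) auto
qed auto

lemma wk_Cons: "wk F (x # xs) \<longleftrightarrow> wk F xs \<and> (xs \<noteq> [] \<longrightarrow> {x, hd xs} \<in> F)"
  by (cases xs) auto

lemma wk_rev: "wk F (rev xs) = wk F xs"
proof (induction xs rule: wk.induct)
  case (3 F x y xs)
  then show ?case by (auto simp: wk_append insert_commute)
qed auto

lemma wk_mono: "wk F xs \<Longrightarrow> F \<subseteq> F' \<Longrightarrow> wk F' xs"
  by (induction F xs rule: wk.induct) auto

lemma wk_take: "wk F xs \<Longrightarrow> wk F (take n xs)"
  using wk_append[of F "take n xs" "drop n xs"] by simp

lemma wk_drop: "wk F xs \<Longrightarrow> wk F (drop n xs)"
  using wk_append[of F "take n xs" "drop n xs"] by simp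

lemma wk_tl: "wk F xs \<Longrightarrow> wk F (tl xs)"
  using wk_drop[of F xs 1] by (simp add: drop_Suc)

lemma walk_to_path:
  assumes "wk F xs" "xs \<noteq> []"
  shows "\<exists>ys. wk F ys \<and> distinct ys \<and> ys \<noteq> [] \<and> hd ys = hd xs \<and> last ys = last xs
          \<and> set ys \<subseteq> set xs \<and> length ys \<le> length xs"
  using assms
proof (induction "length xs" arbitrary: xs rule: less_induct)
  case less
  show ?case
  proof (cases "distinct xs")
    case True then show ?thesis using less by blast
  next
    case False
    then obtain as y bs cs where xs: "xs = as @ [y] @ bs @ [y] @ cs"
      using not_distinct_decomp by blast
    define xs' where "xs' = as @ [y] @ cs"
    have w: "wk F xs'"
      using less(2) unfolding xs xs'_def
      by (auto simp: wk_append wk_Cons)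
    have l: "length xs' < length xs" unfolding xs xs'_def by simp
    have ne: "xs' \<noteq> []" unfolding xs'_def by simp
    obtain ys where ys: "wk F ys \<and> distinct ys \<and> ys \<noteq> [] \<and> hd ys = hd xs' \<and> last ys = last xs'
          \<and> set ys \<subseteq> set xs' \<and> length ys \<le> length xs'"
      using less(1)[OF l w ne] by blast
    have "hd xs' = hd xs" "last xs' = last xs" "set xs' \<subseteq> set xs"
      unfolding xs xs'_def by (cases as; auto)+
    then show ?thesis using ys l by (intro exI[of _ ys]) auto
  qed
qed

lemma cycle_from_walk:
  assumes "a \<noteq> b" "{a,b} \<in> snd G" "wk (snd G - {{a,b}}) w" "w \<noteq> []" "hd w = a" "last w = b"
    "set w \<subseteq> fst G"
  shows "\<exists>cyc. is_cycle G cyc \<and> length cyc \<le> length w"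
proof -
  obtain ys where ys: "wk (snd G - {{a,b}}) ys" "distinct ys" "ys \<noteq> []" "hd ys = a" "last ys = b"
    "set ys \<subseteq> set w" "length ys \<le> length w"
    using walk_to_path[OF assms(3,4)] assms(5,6) by auto
  have "length ys \<noteq> 1" using ys(3,4,5) assms(1) by (cases ys) auto
  moreover have "length ys \<noteq> 2"
  proof
    assume "length ys = 2"
    then obtain x y where "ys = [x,y]" by (cases ys; cases "tl ys") auto
    then show False using ys(1,4,5) by simp
  qed
  moreover have "length ys \<noteq> 0" using ys(3) by simp
  ultimately have "length ys \<ge> 3" by linarith
  moreover have "is_path G ys" unfolding is_path_wk
    using ys assms(7) wk_mono[OF ys(1), of "snd G"] by auto
  moreover have "{last ys, hd ys} \<in> snd G" using ys assms(2) by (simp add: insert_commute)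
  ultimately show ?thesis unfolding is_cycle_def using ys(7) by blast
qed


lemma wk_join: "wk F xs \<Longrightarrow> wk F ys \<Longrightarrow> ys \<noteq> [] \<Longrightarrow> xs \<noteq> [] \<Longrightarrow> last xs = hd ys \<Longrightarrow> wk F (xs @ tl ys)"
  by (cases ys) (auto simp: wk_append wk_Cons)

lemma prefix_eq:
  assumes "distinct P" "distinct Q" "P \<noteq> []" "Q \<noteq> []" "last P = last Q"
    "\<forall>j. j < length P \<and> j < length Q \<longrightarrow> P ! j = Q ! j"
  shows "P = Q"
proof -
  have main: "P = Q" if "length P \<le> length Q" "distinct P" "distinct Q" "P \<noteq> []" "last P = last Q"
    "\<forall>j. j < length P \<and> j < length Q \<longrightarrow> P ! j = Q ! j" for P Q :: "'b list"
  proof -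
    have Qne: "Q \<noteq> []" using that by auto
    have l1: "length P - 1 < length P" "length P - 1 < length Q" "length Q - 1 < length Q"
      using that(1,4) Qne by (auto simp: less_le_trans[of _ "length P" "length Q"])
    have "last P = P ! (length P - 1)" using that by (simp add: last_conv_nth)
    also have "\<dots> = Q ! (length P - 1)" using that(6) l1 by blast
    finally have a1: "last P = Q ! (length P - 1)" .
    have a2: "last Q = Q ! (length Q - 1)" using Qne by (simp add: last_conv_nth)
    have "Q ! (length P - 1) = Q ! (length Q - 1)" using a1 a2 that(5) by simp
    then have "length P - 1 = length Q - 1" using nth_eq_iff_index_eq[OF that(3) l1(2) l1(3)] by simp
    then have "length P = length Q" using that(4) Qne
      by (metis One_nat_def Suc_pred length_greater_0_conv)
    then show ?thesis using that by (simp add: nth_equalityI)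
  qed
  show ?thesis
  proof (cases "length P \<le> length Q")
    case True then show ?thesis using main assms by blast
  next
    case False then show ?thesis using main[of Q P] assms by auto
  qed
qed

lemma path_unique:
  assumes P: "is_path G P" and Q: "is_path G Q" and "hd P = hd Q" "last P = last Q" "P \<noteq> Q"
  shows "\<exists>cyc. is_cycle G cyc \<and> length cyc + 2 \<le> length P + length Q"
proof -
  have dP: "distinct P" "P \<noteq> []" "set P \<subseteq> fst G" "wk (snd G) P" using P by (auto simp: is_path_wk)
  have dQ: "distinct Q" "Q \<noteq> []" "set Q \<subseteq> fst G" "wk (snd G) Q" using Q by (auto simp: is_path_wk)
  have "\<exists>j. j < length P \<and> j < length Q \<and> P ! j \<noteq> Q ! j"
    using prefix_eq[OF dP(1) dQ(1) dP(2) dQ(2) assms(4)] assms(5) by blast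
  define j where "j = (LEAST j. j < length P \<and> j < length Q \<and> P ! j \<noteq> Q ! j)"
  have j: "j < length P" "j < length Q" "P ! j \<noteq> Q ! j"
    using LeastI_ex[OF \<open>\<exists>j. _\<close>] unfolding j_def by auto
  have jmin: "\<And>i. i < j \<Longrightarrow> P ! i = Q ! i"
    using not_less_Least[of _ "\<lambda>j. j < length P \<and> j < length Q \<and> P ! j \<noteq> Q ! j"] j(1,2)
    unfolding j_def[symmetric] by auto
  have "j \<noteq> 0" using j assms(3) dP(2) dQ(2) by (metis hd_conv_nth)
  then obtain i where ij: "j = Suc i" by (cases j) auto
  define x where "x = P ! i"
  have xQ: "Q ! i = x" using jmin[of i] ij x_def by simp
  define e where "e = {x, P ! j}"
  have xne: "x \<noteq> P ! j" using dP(1) j(1) ij unfolding x_def by (simp add: nth_eq_iff_index_eq)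
  have eE: "e \<in> snd G" using dP(4) j(1) ij unfolding e_def x_def wk_nth by auto
  define A where "A = drop j P"
  define B where "B = rev (drop i Q)"
  have wA: "wk (snd G - {e}) A"
    unfolding wk_nth A_def
  proof (intro allI impI)
    fix k assume k: "Suc k < length (drop j P)"
    have "{P ! (j+k), P ! (j + Suc k)} \<in> snd G" using dP(4) k unfolding wk_nth by auto
    moreover have "{P ! (j+k), P ! (j + Suc k)} \<noteq> e"
    proof
      assume "{P ! (j+k), P ! (j + Suc k)} = e"
      then have "P ! (j + Suc k) \<in> {P ! i, P ! j}" unfolding e_def x_def by auto
      then show False using dP(1) k ij by (auto simp: nth_eq_iff_index_eq)
    qed
    ultimately show "{drop j P ! k, drop j P ! Suc k} \<in> snd G - {e}" using k by auto
  qed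
  have wB0: "wk (snd G - {e}) (drop i Q)"
    unfolding wk_nth
  proof (intro allI impI)
    fix k assume k: "Suc k < length (drop i Q)"
    have "{Q ! (i+k), Q ! (i + Suc k)} \<in> snd G" using dQ(4) k unfolding wk_nth by auto
    moreover have "{Q ! (i+k), Q ! (i + Suc k)} \<noteq> e"
    proof
      assume h: "{Q ! (i+k), Q ! (i + Suc k)} = e"
      then have "x \<in> {Q ! (i+k), Q ! (i + Suc k)}" unfolding e_def by auto
      then have "k = 0" using dQ(1) k xQ by (auto simp: nth_eq_iff_index_eq)
      then have "Q ! j = P ! j" using h xne xQ ij unfolding e_def by (auto simp: doubleton_eq_iff)
      then show False using j(3) by simp
    qed
    ultimately show "{drop i Q ! k, drop i Q ! Suc k} \<in> snd G - {e}" using k by auto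
  qed
  have wB: "wk (snd G - {e}) B" unfolding B_def wk_rev by (rule wB0)
  have Ane: "A \<noteq> []" using j unfolding A_def by simp
  have Bne: "B \<noteq> []" using j ij unfolding B_def by simp
  have lastA: "last A = last P" unfolding A_def using j(1) by simp
  have hdB: "hd B = last Q" unfolding B_def using j ij by (simp add: hd_rev)
  define W where "W = A @ tl B"
  have wW: "wk (snd G - {e}) W" unfolding W_def
    using wk_join[OF wA wB Bne Ane] lastA hdB assms(4) by simp
  have hdW: "hd W = P ! j" unfolding W_def A_def using j(1) Ane by (simp add: hd_drop_conv_nth A_def)
  have lB: "length B \<ge> 2" unfolding B_def using j ij by simp
  have lastW: "last W = x"
  proof -
    have "tl B \<noteq> []" using lB by (cases B) auto
    then have "last W = last (tl B)" unfolding W_def by simp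
    also have "\<dots> = last B" using lB by (cases B) auto
    also have "\<dots> = Q ! i" unfolding B_def using j ij by (simp add: last_rev hd_drop_conv_nth)
    finally show ?thesis using xQ by simp
  qed
  have "set (tl B) \<subseteq> set B" by (cases B) auto
  also have "\<dots> \<subseteq> set Q" unfolding B_def by (simp add: set_drop_subset)
  finally have WG: "set W \<subseteq> fst G" unfolding W_def A_def using dP(3) dQ(3) set_drop_subset[of j P] by auto
  have lW: "length W + 2 \<le> length P + length Q"
    unfolding W_def A_def B_def using j ij by simp
  have Wne: "W \<noteq> []" using Ane W_def by simp
  obtain cyc where "is_cycle G cyc" "length cyc \<le> length W"
    using cycle_from_walk[of "P ! j" x G W] xne eE wW Wne hdW lastW WG
    unfolding e_def by (auto simp: insert_commute)
  then show ?thesis using lW by (intro exI[of _ cyc]) auto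
qed


lemma wf_finite_E: "wf_graph G \<Longrightarrow> finite (snd G)"
proof -
  assume w: "wf_graph G"
  have "snd G \<subseteq> Pow (fst G)" using w unfolding wf_graph_def by auto
  moreover have "finite (Pow (fst G))" using w unfolding wf_graph_def by simp
  ultimately show ?thesis by (rule finite_subset)
qed

lemma wf_delete: "wf_graph G \<Longrightarrow> wf_graph (fst G - X, {e\<in>snd G. e \<inter> X = {}})"
  unfolding wf_graph_def by fastforce

lemma deg0_noedge: "wf_graph G \<Longrightarrow> degree G v = 0 \<Longrightarrow> {e\<in>snd G. e \<inter> {v} = {}} = snd G"
proof -
  assume w: "wf_graph G" and d: "degree G v = 0"
  have "finite {e\<in>snd G. v \<in> e}" using wf_finite_E[OF w] by simp
  then have "{e\<in>snd G. v \<in> e} = {}" using d unfolding degree_def by simp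
  then show ?thesis by auto
qed

lemma reduction_form:
  assumes w: "wf_graph G" and p: "p \<ge> 2" and r: "p_reduction p G G1"
  shows "\<exists>X. X \<noteq> {} \<and> X \<subseteq> fst G \<and> G1 = (fst G - X, {e\<in>snd G. e \<inter> X = {}})"
  using r unfolding p_reduction_def
proof (elim disjE bexE exE conjE)
  fix v assume "v \<in> fst G" "degree G v = 0" "G1 = (fst G - {v}, snd G)"
  then show ?thesis using deg0_noedge[OF w, of v] by (intro exI[of _ "{v}"]) auto
next
  fix v assume "v \<in> fst G" "degree G v = 1" "G1 = (fst G - {v}, {e \<in> snd G. v \<notin> e})"
  then show ?thesis by (intro exI[of _ "{v}"]) auto
next
  fix xs assume h: "is_path G xs" "hd xs \<noteq> last xs" "p \<le> length xs - 1"
    "G1 = (fst G - set (butlast (tl xs)), {e \<in> snd G. e \<inter> set (butlast (tl xs)) = {}})"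
  have "length xs \<ge> 3" using h(3) p by linarith
  then have "butlast (tl xs) \<noteq> []" by (cases xs; cases "tl xs") auto
  moreover have "set (butlast (tl xs)) \<subseteq> fst G" using h(1) unfolding is_path_def
    by (meson in_set_butlastD list.set_sel(2) subset_iff tl_Nil)
  ultimately show ?thesis using h(4) by (intro exI[of _ "set (butlast (tl xs))"]) auto
qed

lemma reduce:
  assumes "wf_graph G" "p \<ge> 2"
  shows "path_degenerate p G \<or>
    (\<exists>V'. V' \<subseteq> fst G \<and> V' \<noteq> {} \<and> \<not> (\<exists>G''. p_reduction p (V', {e\<in>snd G. e \<subseteq> V'}) G''))"
  using assms
proof (induction "card (fst G)" arbitrary: G rule: less_induct)
  case less
  show ?case
  proof (cases "fst G = {}")
    case True
    then have "snd G = {}" using less(2) unfolding wf_graph_def by auto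
    then have "G = ({}, {})" using True by (cases G) auto
    then show ?thesis using path_degenerate.empty by auto
  next
    case ne: False
    show ?thesis
    proof (cases "\<exists>G1. p_reduction p G G1")
      case True
      then obtain G1 where r: "p_reduction p G G1" by blast
      obtain X where X: "X \<noteq> {}" "X \<subseteq> fst G" "G1 = (fst G - X, {e\<in>snd G. e \<inter> X = {}})"
        using reduction_form[OF less(2,3) r] by blast
      have fin: "finite (fst G)" using less(2) unfolding wf_graph_def by simp
      have c: "card (fst G1) < card (fst G)" using X fin
      proof -
        have "fst G - X \<subset> fst G" using X(1,2) by blast
        then show ?thesis using psubset_card_mono[OF fin] X(3) by simp
      qed
      have w1: "wf_graph G1" using wf_delete[OF less(2)] X(3) by simp
      from less(1)[OF c w1 less(3)] show ?thesis
      proof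
        assume "path_degenerate p G1"
        then show ?thesis using path_degenerate.step[OF r] by blast
      next
        assume "\<exists>V'. V' \<subseteq> fst G1 \<and> V' \<noteq> {} \<and> \<not> (\<exists>G''. p_reduction p (V', {e \<in> snd G1. e \<subseteq> V'}) G'')"
        then obtain V' where V': "V' \<subseteq> fst G1" "V' \<noteq> {}" "\<not> (\<exists>G''. p_reduction p (V', {e \<in> snd G1. e \<subseteq> V'}) G'')"
          by blast
        have "{e \<in> snd G1. e \<subseteq> V'} = {e \<in> snd G. e \<subseteq> V'}" using V'(1) X(3) by auto
        then show ?thesis using V' X(3) by auto
      qed
    next
      case False
      have "{e\<in>snd G. e \<subseteq> fst G} = snd G" using less(2) unfolding wf_graph_def by auto
      then show ?thesis using False ne by (cases G) auto
    qed
  qed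
qed


locale irred =
  fixes V :: "'a set" and E :: "'a set set" and p g :: nat
  assumes finV: "finite V"
  and wfE: "\<forall>e\<in>E. \<exists>x y. x\<in>V \<and> y\<in>V \<and> x\<noteq>y \<and> e={x,y}"
  and girth: "\<And>xs. is_cycle (V,E) xs \<Longrightarrow> g \<le> length xs"
  and irr: "\<not>(\<exists>G''. p_reduction p (V,E) G'')"
  and p2: "p \<ge> 2"
begin

lemma wfG: "wf_graph (V,E)" using finV wfE unfolding wf_graph_def by simp

lemma finE: "finite E" using wf_finite_E[OF wfG] by simp

lemma edge_ne: "{x,y} \<in> E \<Longrightarrow> x \<noteq> y"
  using wfE by (metis doubleton_eq_iff insert_absorb2)

lemma edge_V: "{x,y} \<in> E \<Longrightarrow> x \<in> V \<and> y \<in> V"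
  using wfE by (metis doubleton_eq_iff)

lemma deg_ge2: "v \<in> V \<Longrightarrow> degree (V,E) v \<ge> 2"
proof -
  assume v: "v \<in> V"
  have "degree (V,E) v \<noteq> 0"
  proof
    assume "degree (V,E) v = 0"
    then have "p_reduction p (V,E) (V - {v}, E)" unfolding p_reduction_def using v by auto
    then show False using irr by blast
  qed
  moreover have "degree (V,E) v \<noteq> 1"
  proof
    assume "degree (V,E) v = 1"
    then have "p_reduction p (V,E) (V - {v}, {e\<in>E. v \<notin> e})" unfolding p_reduction_def using v by auto
    then show False using irr by blast
  qed
  ultimately show ?thesis by linarith
qed

lemma nbr_avoid:
  assumes v: "v \<in> V" and d: "degree (V,E) v \<ge> Suc (card Z)" and fZ: "finite Z"
  shows "\<exists>y. {v,y} \<in> E \<and> y \<notin> Z"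
proof -
  let ?A = "{e\<in>E. v \<in> e}"
  let ?B = "(\<lambda>z. {v,z}) ` Z"
  have "card ?B \<le> card Z" using card_image_le[OF fZ] by blast
  then have "card ?A > card ?B" using d unfolding degree_def by simp
  moreover have "finite ?A" using finE by simp
  ultimately have "\<not> ?A \<subseteq> ?B"
    using card_mono[of ?B ?A] finite_imageI[OF fZ] by (meson card_mono leD)
  then obtain e where e: "e \<in> E" "v \<in> e" "e \<notin> ?B" by blast
  obtain x y where xy: "e = {x,y}" using wfE e(1) by blast
  obtain w where w: "e = {v,w}" using xy e(2) by blast
  have "w \<notin> Z" using e(3) w by auto
  then show ?thesis using e(1) w by blast
qed

lemma nbr1: "v \<in> V \<Longrightarrow> \<exists>y. {v,y} \<in> E \<and> y \<noteq> z"
  using nbr_avoid[of v "{z}"] deg_ge2[of v] by auto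

definition Pth :: "'a \<Rightarrow> nat \<Rightarrow> 'a list set" where
  "Pth c r = {xs. is_path (V,E) xs \<and> hd xs = c \<and> length xs = Suc r}"

lemma Pth_finite: "finite (Pth c r)"
proof -
  have "Pth c r \<subseteq> {xs. set xs \<subseteq> V \<and> length xs = Suc r}" unfolding Pth_def is_path_def by auto
  moreover have "finite {xs. set xs \<subseteq> V \<and> length xs = Suc r}"
    using finite_lists_length_eq[OF finV] by simp
  ultimately show ?thesis by (rule finite_subset)
qed

lemma path_drop: "is_path G xs \<Longrightarrow> n < length xs \<Longrightarrow> is_path G (drop n xs)"
  unfolding is_path_wk using wk_drop set_drop_subset by fastforce

lemma path_take: "is_path G xs \<Longrightarrow> 0 < n \<Longrightarrow> is_path G (take n xs)"
  unfolding is_path_wk using wk_take set_take_subset by fastforce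

lemma ext_step:
  assumes xs: "xs \<in> Pth c r" and gr: "Suc r < g" and e: "{last xs, y} \<in> E"
    and ny: "r \<ge> 1 \<Longrightarrow> y \<noteq> xs ! (r - 1)"
  shows "xs @ [y] \<in> Pth c (Suc r)"
proof -
  have P: "is_path (V,E) xs" "hd xs = c" "length xs = Suc r" using xs unfolding Pth_def by auto
  have lx: "last xs = xs ! r" using P(3) last_conv_nth[of xs] by fastforce
  have yV: "y \<in> V" using edge_V[OF e] by simp
  have ynl: "y \<noteq> last xs" using edge_ne[OF e] by simp
  have ynot: "y \<notin> set xs"
  proof
    assume "y \<in> set xs"
    then obtain j where j: "j < Suc r" "xs ! j = y" using P(3) by (metis in_set_conv_nth)
    have "j \<noteq> r" using j ynl lx by auto
    moreover have "j \<noteq> r - 1" using ny j(2) \<open>j \<noteq> r\<close> j(1) by (cases r) auto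
    ultimately have j2: "j + 2 \<le> r" using j(1) by linarith
    define cyc where "cyc = drop j xs"
    have "is_path (V,E) cyc" unfolding cyc_def using path_drop[OF P(1)] j P(3) by simp
    moreover have "length cyc \<ge> 3" unfolding cyc_def using j2 P(3) by simp
    moreover have "{last cyc, hd cyc} \<in> E" unfolding cyc_def using j P(3) e
      by (simp add: hd_drop_conv_nth)
    ultimately have "is_cycle (V,E) cyc" unfolding is_cycle_def by simp
    then have "g \<le> length cyc" by (rule girth)
    then show False unfolding cyc_def using P(3) gr by simp
  qed
  have "is_path (V,E) (xs @ [y])" using P(1) ynot yV e unfolding is_path_wk
    by (auto simp: wk_append)
  then show ?thesis using P unfolding Pth_def by (cases xs) auto
qed

lemma ext_any:
  assumes "xs \<in> Pth c r" "r + m < g"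
  shows "\<exists>ys \<in> Pth c (r + m). take (Suc r) ys = xs"
  using assms(2)
proof (induction m)
  case 0 then show ?case using assms(1) unfolding Pth_def by auto
next
  case (Suc m)
  then obtain ys where ys: "ys \<in> Pth c (r + m)" "take (Suc r) ys = xs" by auto
  have P: "is_path (V,E) ys" "length ys = Suc (r+m)" using ys unfolding Pth_def by auto
  have "ys \<noteq> []" "set ys \<subseteq> V" using P unfolding is_path_def by auto
  then have "last ys \<in> V" using last_in_set by blast
  then obtain y where y: "{last ys, y} \<in> E" "y \<noteq> ys ! (r + m - 1)" using nbr1 by blast
  have "Suc (r + m) < g" using Suc(2) by simp
  from ext_step[OF ys(1) this y(1)] y(2)
  have "ys @ [y] \<in> Pth c (Suc (r+m))" by blast
  moreover have "take (Suc r) (ys @ [y]) = xs" using ys(2) P(2) by simp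
  ultimately show ?case by (metis add_Suc_right)
qed

lemma doubling:
  assumes xs: "xs \<in> Pth c r" and rp: "r + p < g"
  shows "\<exists>ys1 ys2. ys1 \<in> Pth c (r+p) \<and> ys2 \<in> Pth c (r+p) \<and> ys1 \<noteq> ys2 \<and>
     take (Suc r) ys1 = xs \<and> take (Suc r) ys2 = xs"
proof -
  obtain ys1 where y1: "ys1 \<in> Pth c (r+p)" "take (Suc r) ys1 = xs" using ext_any[OF xs rp] by blast
  have P1: "is_path (V,E) ys1" "length ys1 = Suc (r+p)" using y1 unfolding Pth_def by auto
  define seg where "seg = drop r ys1"
  have segP: "is_path (V,E) seg" unfolding seg_def using path_drop[OF P1(1)] P1(2) by simp
  have lseg: "length seg = Suc p" unfolding seg_def using P1(2) by simp
  have hl: "hd seg \<noteq> last seg"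
  proof -
    have "distinct seg" using segP unfolding is_path_def by simp
    moreover have "seg \<noteq> []" using lseg by auto
    then have "hd seg = seg ! 0" "last seg = seg ! p" using lseg
      by (auto simp: hd_conv_nth last_conv_nth)
    ultimately show ?thesis using lseg p2 by (simp add: nth_eq_iff_index_eq)
  qed
  have "\<exists>x\<in>set (butlast (tl seg)). degree (V,E) x \<noteq> 2"
  proof (rule ccontr)
    assume "\<not> ?thesis"
    then have "p_reduction p (V,E) (V - set (butlast (tl seg)), {e \<in> E. e \<inter> set (butlast (tl seg)) = {}})"
      unfolding p_reduction_def using segP hl lseg by auto
    then show False using irr by blast
  qed
  then obtain k where k: "k < p - 1" "degree (V,E) (seg ! Suc k) \<noteq> 2"
    using lseg by (auto simp: in_set_conv_nth nth_butlast nth_tl)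
  define i where "i = r + Suc k"
  have i: "r < i" "i < r + p" unfolding i_def using k by auto
  have segi: "seg ! Suc k = ys1 ! i" unfolding seg_def i_def using P1(2) k by simp
  have iV: "ys1 ! i \<in> V" using P1 i unfolding is_path_def by auto
  have d3: "degree (V,E) (ys1 ! i) \<ge> Suc (card {ys1 ! (i-1), ys1 ! Suc i})"
    using deg_ge2[OF iV] k(2) segi card_insert_le[of "{ys1 ! Suc i}" "ys1 ! (i-1)"]
    by (simp add: card_insert_if)
  obtain y where y: "{ys1 ! i, y} \<in> E" "y \<noteq> ys1 ! (i-1)" "y \<noteq> ys1 ! Suc i"
    using nbr_avoid[OF iV d3] by auto
  define pre where "pre = take (Suc i) ys1"
  have preP: "pre \<in> Pth c i" unfolding pre_def Pth_def using path_take[OF P1(1), of "Suc i"] P1 i y1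
    unfolding Pth_def by (auto simp: hd_take min_def)
  have lpre: "last pre = ys1 ! i" unfolding pre_def using P1(2) i by (simp add: take_Suc_conv_app_nth)
  have "pre @ [y] \<in> Pth c (Suc i)"
    using ext_step[OF preP _ _] y i rp lpre unfolding pre_def using P1(2) by (auto simp: nth_take)
  then obtain ys2 where y2: "ys2 \<in> Pth c (Suc i + (r + p - Suc i))" "take (Suc (Suc i)) ys2 = pre @ [y]"
    using ext_any[of "pre @ [y]" c "Suc i" "r + p - Suc i"] rp i by auto
  have y2': "ys2 \<in> Pth c (r+p)" using y2(1) i by simp
  have "ys2 ! Suc i = y"
  proof -
    have "(take (Suc (Suc i)) ys2) ! Suc i = ys2 ! Suc i" by simp
    then show ?thesis using y2(2) unfolding pre_def using P1(2) i by (simp add: nth_append min_def)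
  qed
  then have "ys1 \<noteq> ys2" using y(3) by auto
  moreover have "take (Suc r) ys2 = xs"
  proof -
    have "take (Suc r) ys2 = take (Suc r) (take (Suc (Suc i)) ys2)" using i by simp
    also have "\<dots> = take (Suc r) pre" using y2(2) i unfolding pre_def using P1(2) by (simp add: min_def)
    also have "\<dots> = xs" unfolding pre_def using y1(2) i by simp
    finally show ?thesis .
  qed
  ultimately show ?thesis using y1 y2' by blast
qed


lemma Pth0: "c \<in> V \<Longrightarrow> Pth c 0 = {[c]}"
  unfolding Pth_def is_path_def by (auto simp: length_Suc_conv)

lemma N_mono: assumes "Suc r < g" shows "card (Pth c r) \<le> card (Pth c (Suc r))"
proof -
  define f where "f xs = (SOME ys. ys \<in> Pth c (Suc r) \<and> take (Suc r) ys = xs)" for xs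
  have f: "f xs \<in> Pth c (Suc r) \<and> take (Suc r) (f xs) = xs" if "xs \<in> Pth c r" for xs
  proof -
    have "\<exists>ys. ys \<in> Pth c (Suc r) \<and> take (Suc r) ys = xs" using ext_any[OF that, of 1] assms by auto
    then show ?thesis unfolding f_def by (rule someI_ex)
  qed
  have "inj_on f (Pth c r)" by (rule inj_onI) (metis f)
  moreover have "f ` Pth c r \<subseteq> Pth c (Suc r)" using f by auto
  ultimately show ?thesis using card_inj_on_le Pth_finite by blast
qed

lemma N_double: assumes "r + p < g" shows "2 * card (Pth c r) \<le> card (Pth c (r+p))"
proof -
  define pk where "pk xs = (SOME pr. fst pr \<in> Pth c (r+p) \<and> snd pr \<in> Pth c (r+p) \<and> fst pr \<noteq> snd pr
      \<and> take (Suc r) (fst pr) = xs \<and> take (Suc r) (snd pr) = xs)" for xs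
  have pk: "fst (pk xs) \<in> Pth c (r+p) \<and> snd (pk xs) \<in> Pth c (r+p) \<and> fst (pk xs) \<noteq> snd (pk xs)
      \<and> take (Suc r) (fst (pk xs)) = xs \<and> take (Suc r) (snd (pk xs)) = xs" if xsP: "xs \<in> Pth c r" for xs
  proof -
    obtain a1 a2 where "a1 \<in> Pth c (r+p) \<and> a2 \<in> Pth c (r+p) \<and> a1 \<noteq> a2 \<and> take (Suc r) a1 = xs \<and> take (Suc r) a2 = xs"
      using doubling[OF xsP assms] by blast
    then have "\<exists>pr. fst pr \<in> Pth c (r+p) \<and> snd pr \<in> Pth c (r+p) \<and> fst pr \<noteq> snd pr
      \<and> take (Suc r) (fst pr) = xs \<and> take (Suc r) (snd pr) = xs" by (intro exI[of _ "(a1,a2)"]) auto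
    then show ?thesis unfolding pk_def by (rule someI_ex)
  qed
  define f where "f = (\<lambda>(xs, b::bool). if b then fst (pk xs) else snd (pk xs))"
  have "inj_on f (Pth c r \<times> UNIV)"
  proof (rule inj_onI)
    fix x y assume x: "x \<in> Pth c r \<times> UNIV" and y: "y \<in> Pth c r \<times> UNIV" and e: "f x = f y"
    obtain xs b where xb: "x = (xs, b)" by (cases x)
    obtain ys d where yd: "y = (ys, d)" by (cases y)
    have tk: "take (Suc r) (f (zs, b')) = zs" if "zs \<in> Pth c r" for zs b'
      using pk[OF that] unfolding f_def by simp
    have xsP: "xs \<in> Pth c r" and ysP: "ys \<in> Pth c r" using x y xb yd by auto
    have "xs = ys" using tk[OF xsP, of b] tk[OF ysP, of d] e xb yd by simp
    moreover have "b = d"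
    proof (rule ccontr)
      assume "b \<noteq> d"
      then have "f (xs, b) \<noteq> f (xs, d)" using pk[OF xsP] unfolding f_def by (cases b; cases d) auto
      then show False using e xb yd \<open>xs = ys\<close> by simp
    qed
    ultimately show "x = y" using xb yd by simp
  qed
  moreover have "f ` (Pth c r \<times> UNIV) \<subseteq> Pth c (r+p)" using pk unfolding f_def by auto
  ultimately have "card (Pth c r \<times> (UNIV :: bool set)) \<le> card (Pth c (r+p))"
    using card_inj_on_le Pth_finite by blast
  then show ?thesis by (simp add: card_cartesian_product mult.commute)
qed

lemma N_mono2: "a \<le> b \<Longrightarrow> b < g \<Longrightarrow> card (Pth c a) \<le> card (Pth c b)"
proof (induction b)
  case 0 then show ?case by simp
next
  case (Suc b)
  show ?case
  proof (cases "a = Suc b")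
    case False
    then have "card (Pth c a) \<le> card (Pth c b)" using Suc by simp
    also have "\<dots> \<le> card (Pth c (Suc b))" using N_mono Suc(3) by simp
    finally show ?thesis .
  qed simp
qed

lemma N_pow: assumes c: "c \<in> V" and r: "r < g" shows "2 ^ (r div p) \<le> card (Pth c r)"
proof -
  have q: "2 ^ q \<le> card (Pth c (q * p))" if "q * p < g" for q
    using that
  proof (induction q)
    case 0 then show ?case using Pth0[OF c] by simp
  next
    case (Suc q)
    have "q * p < g" using Suc(2) p2 by simp
    then have "2 ^ q \<le> card (Pth c (q * p))" by (rule Suc.IH)
    moreover have "q * p + p < g" using Suc(2) by (simp add: add.commute)
    then have "2 * card (Pth c (q*p)) \<le> card (Pth c (q*p + p))" by (rule N_double)
    ultimately show ?case by (simp add: add.commute)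
  qed
  have "r div p * p \<le> r" by simp
  then have "r div p * p < g" using r by linarith
  then have "2 ^ (r div p) \<le> card (Pth c (r div p * p))" by (rule q)
  also have "\<dots> \<le> card (Pth c r)" using N_mono2 \<open>r div p * p \<le> r\<close> r by blast
  finally show ?thesis .
qed

end


context irred begin

definition reach :: "nat \<Rightarrow> 'a \<Rightarrow> 'a \<Rightarrow> bool" where
  "reach n u v \<longleftrightarrow> (\<exists>w. wk E w \<and> w \<noteq> [] \<and> set w \<subseteq> V \<and> hd w = u \<and> last w = v \<and> length w = Suc n)"

definition Dist :: "'a \<Rightarrow> 'a \<Rightarrow> nat" where
  "Dist u v = (LEAST n. reach n u v)"

lemma reach0: "u \<in> V \<Longrightarrow> reach 0 u u"
  unfolding reach_def by (intro exI[of _ "[u]"]) auto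

lemma reach0D: "reach 0 u v \<Longrightarrow> u = v"
  unfolding reach_def by (auto simp: length_Suc_conv)

lemma reachV: "reach n u v \<Longrightarrow> u \<in> V \<and> v \<in> V"
  unfolding reach_def by (metis hd_in_set last_in_set subsetD)

lemma reach_step: "reach n u v \<Longrightarrow> {v,w} \<in> E \<Longrightarrow> reach (Suc n) u w"
proof -
  assume "reach n u v" "{v,w} \<in> E"
  then obtain ws where ws: "wk E ws" "ws \<noteq> []" "set ws \<subseteq> V" "hd ws = u" "last ws = v" "length ws = Suc n"
    unfolding reach_def by blast
  have "wk E (ws @ [w])" using ws \<open>{v,w} \<in> E\<close> by (simp add: wk_append)
  moreover have "w \<in> V" using edge_V[OF \<open>{v,w} \<in> E\<close>] by simp
  ultimately show ?thesis unfolding reach_def using ws by (intro exI[of _ "ws @ [w]"]) auto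
qed

lemma reach_sym: "reach n u v \<Longrightarrow> reach n v u"
proof -
  assume "reach n u v"
  then obtain ws where ws: "wk E ws" "ws \<noteq> []" "set ws \<subseteq> V" "hd ws = u" "last ws = v" "length ws = Suc n"
    unfolding reach_def by blast
  then show ?thesis unfolding reach_def
    by (intro exI[of _ "rev ws"]) (auto simp: wk_rev hd_rev last_rev)
qed

lemma reach_trans: "reach a u v \<Longrightarrow> reach b v w \<Longrightarrow> reach (a + b) u w"
proof (induction b arbitrary: w)
  case 0 then show ?case using reach0D by auto
next
  case (Suc b)
  obtain ws where ws: "wk E ws" "ws \<noteq> []" "set ws \<subseteq> V" "hd ws = v" "last ws = w" "length ws = Suc (Suc b)"
    using Suc(3) unfolding reach_def by blast
  define ws' where "ws' = butlast ws"
  have ws_eq: "ws = ws' @ [w]" unfolding ws'_def using ws(2,5) append_butlast_last_id[of ws] by simp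
  have "ws' \<noteq> []" using ws(6) ws_eq by auto
  have "wk E ws'" "{last ws', w} \<in> E" using ws(1) \<open>ws' \<noteq> []\<close> unfolding ws_eq by (auto simp: wk_append)
  moreover have "reach b v (last ws')" unfolding reach_def using ws \<open>ws' \<noteq> []\<close> \<open>wk E ws'\<close>
    by (intro exI[of _ ws']) (auto simp: ws_eq)
  ultimately have "reach (a + b) u (last ws')" using Suc by blast
  then show ?case using reach_step \<open>{last ws', w} \<in> E\<close> by fastforce
qed

lemma Dist_le: "reach n u v \<Longrightarrow> Dist u v \<le> n"
  unfolding Dist_def by (rule Least_le)

lemma Dist_reach: "reach n u v \<Longrightarrow> reach (Dist u v) u v"
  unfolding Dist_def by (rule LeastI)

lemma Dist_sym: "reach n u v \<Longrightarrow> Dist u v = Dist v u"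
  by (meson Dist_le Dist_reach le_antisym reach_sym)

lemma reach_pred: "reach (Suc n) u w \<Longrightarrow> \<exists>v. reach n u v \<and> {v,w} \<in> E"
proof -
  assume "reach (Suc n) u w"
  then obtain ws where ws: "wk E ws" "ws \<noteq> []" "set ws \<subseteq> V" "hd ws = u" "last ws = w" "length ws = Suc (Suc n)"
    unfolding reach_def by blast
  define ws' where "ws' = butlast ws"
  have ws_eq: "ws = ws' @ [w]" unfolding ws'_def using ws(2,5) append_butlast_last_id[of ws] by simp
  have "ws' \<noteq> []" using ws(6) ws_eq by auto
  have "wk E ws'" "{last ws', w} \<in> E" using ws(1) \<open>ws' \<noteq> []\<close> unfolding ws_eq by (auto simp: wk_append)
  moreover have "reach n u (last ws')" unfolding reach_def using ws \<open>ws' \<noteq> []\<close> \<open>wk E ws'\<close>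
    by (intro exI[of _ ws']) (auto simp: ws_eq)
  ultimately show ?thesis by blast
qed

lemma Dist_pred:
  assumes "reach n u w" "Dist u w > 0"
  shows "\<exists>v. {v,w} \<in> E \<and> reach (Dist u w - 1) u v \<and> Dist u v = Dist u w - 1"
proof -
  obtain k where k: "Dist u w = Suc k" using assms(2) by (cases "Dist u w") auto
  obtain v where v: "reach k u v" "{v,w} \<in> E" using reach_pred Dist_reach[OF assms(1)] k by metis
  have "Dist u v \<le> k" using Dist_le[OF v(1)] .
  moreover have "Suc (Dist u v) \<ge> Suc k"
    using Dist_le[OF reach_step[OF Dist_reach[OF v(1)] v(2)]] k by simp
  ultimately show ?thesis using v k by auto
qed

lemma path_reach: "is_path (V,E) P \<Longrightarrow> reach (length P - 1) (hd P) (last P)"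
  unfolding reach_def is_path_wk by (intro exI[of _ P]) auto

lemma reach_path: "reach n u v \<Longrightarrow> \<exists>P. is_path (V,E) P \<and> hd P = u \<and> last P = v \<and> length P \<le> Suc n"
proof -
  assume "reach n u v"
  then obtain ws where ws: "wk E ws" "ws \<noteq> []" "set ws \<subseteq> V" "hd ws = u" "last ws = v" "length ws = Suc n"
    unfolding reach_def by blast
  obtain ys where "wk E ys \<and> distinct ys \<and> ys \<noteq> [] \<and> hd ys = hd ws \<and> last ys = last ws
          \<and> set ys \<subseteq> set ws \<and> length ys \<le> length ws" using walk_to_path[OF ws(1,2)] by blast
  then show ?thesis using ws unfolding is_path_wk by (intro exI[of _ ys]) auto
qed

end


locale clus = irred V E p g for V :: "'a set" and E p g +
  fixes R :: nat and S :: "'a set" and f :: "'a \<Rightarrow> nat"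
  assumes SV: "S \<subseteq> V" and Sne: "S \<noteq> {}"
  and far: "\<And>c c' n. c\<in>S \<Longrightarrow> c'\<in>S \<Longrightarrow> c\<noteq>c' \<Longrightarrow> reach n c c' \<Longrightarrow> n > 2*R"
  and cover: "\<And>v. v\<in>V \<Longrightarrow> \<exists>c\<in>S. \<exists>n\<le>2*R. reach n c v"
  and finj: "inj_on f V"
  and gR: "8*R + 8 \<le> g"
begin

definition "M = Suc (Max (f ` V))"
definition "key c v = Dist c v * M + f c"
definition "Cands v = {c\<in>S. \<exists>n. reach n c v}"
definition "center v = arg_min_on (\<lambda>c. key c v) (Cands v)"
definition "D v = Dist (center v) v"
definition "par v = (SOME u. {u,v} \<in> E \<and> reach (D v - 1) (center v) u \<and> Dist (center v) u = D v - 1)"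
definition "X c = {v\<in>V. center v = c}"
definition "TE c = {{w, par w} | w. w \<in> X c \<and> w \<noteq> c}"

lemma f_lt: "v \<in> V \<Longrightarrow> f v < M"
  unfolding M_def using finV by (simp add: le_imp_less_Suc)

lemma key_mod: "c \<in> V \<Longrightarrow> key c v mod M = f c"
  unfolding key_def using f_lt by simp

lemma key_inj: "c \<in> S \<Longrightarrow> c' \<in> S \<Longrightarrow> key c v = key c' v \<Longrightarrow> c = c'"
  using key_mod[of c v] key_mod[of c' v] SV finj by (metis inj_onD subsetD)

lemma key_lt: "c \<in> S \<Longrightarrow> key c v < Suc (Dist c v) * M"
  unfolding key_def using f_lt SV by auto

lemma key_ge: "Dist c v * M \<le> key c v"
  unfolding key_def by simp

lemma Cands_fin: "finite (Cands v)"
  using finite_subset[OF _ finite_subset[OF SV finV]] unfolding Cands_def by auto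

lemma Cands_ne: "v \<in> V \<Longrightarrow> Cands v \<noteq> {}"
  using cover unfolding Cands_def by blast

lemma center_props:
  assumes "v \<in> V"
  shows "center v \<in> Cands v" "\<And>c. c \<in> Cands v \<Longrightarrow> key (center v) v \<le> key c v"
  unfolding center_def using arg_min_if_finite[OF Cands_fin Cands_ne[OF assms]]
    arg_min_least[OF Cands_fin Cands_ne[OF assms]] by auto

lemma center_eqI:
  assumes "v \<in> V" "c \<in> Cands v" "\<And>c'. c' \<in> Cands v \<Longrightarrow> key c v \<le> key c' v"
  shows "center v = c"
proof -
  have "key (center v) v = key c v"
    using center_props[OF assms(1)] assms(2,3) by (meson le_antisym)
  then show ?thesis using key_inj center_props(1)[OF assms(1)] assms(2) unfolding Cands_def by blast
qed

lemma center_S: "v \<in> V \<Longrightarrow> center v \<in> S"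
  using center_props(1) unfolding Cands_def by blast

lemma D_reach: "v \<in> V \<Longrightarrow> reach (D v) (center v) v"
  using center_props(1) Dist_reach unfolding Cands_def D_def by blast

lemma D_le: assumes "v \<in> V" shows "D v \<le> 2*R"
proof -
  obtain c0 n where c0: "c0 \<in> S" "n \<le> 2*R" "reach n c0 v" using cover[OF assms] by blast
  have "c0 \<in> Cands v" using c0 unfolding Cands_def by blast
  then have "key (center v) v \<le> key c0 v" using center_props(2)[OF assms] by blast
  then have "D v * M < Suc (Dist c0 v) * M"
    using key_ge[of "center v" v] key_lt[OF c0(1), of v] unfolding D_def by linarith
  then have "D v < Suc (Dist c0 v)" by (simp only: mult_less_cancel2)
  then show ?thesis using Dist_le[OF c0(3)] c0(2) by linarith
qed

lemma ball:
  assumes c: "c \<in> S" and r: "reach n c v" and n: "n \<le> R"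
  shows "center v = c"
proof (rule center_eqI)
  show v: "v \<in> V" using reachV[OF r] by simp
  show "c \<in> Cands v" using c r unfolding Cands_def by blast
  fix c' assume c': "c' \<in> Cands v"
  show "key c v \<le> key c' v"
  proof (cases "c' = c")
    case False
    have c'S: "c' \<in> S" using c' unfolding Cands_def by blast
    have rc': "reach (Dist c' v) c' v" using c' Dist_reach unfolding Cands_def by blast
    have "reach (Dist c' v + n) c' c" using reach_trans[OF rc' reach_sym[OF r]] .
    then have "Dist c' v + n > 2 * R" using far[OF c'S c False] by blast
    then have "Suc (Dist c v) \<le> Dist c' v" using Dist_le[OF r] n by linarith
    then have "Suc (Dist c v) * M \<le> Dist c' v * M" by (rule mult_le_mono1)
    then show ?thesis using key_lt[OF c, of v] key_ge[of c' v] by linarith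
  qed simp
qed

lemma center_self: "c \<in> S \<Longrightarrow> center c = c"
  using ball[OF _ reach0] SV by auto

lemma D0: "v \<in> V \<Longrightarrow> D v = 0 \<Longrightarrow> center v = v"
  using D_reach reach0D by fastforce

lemma par_props:
  assumes v: "v \<in> V" and d: "D v > 0"
  shows "{par v, v} \<in> E" "par v \<in> V" "center (par v) = center v" "D (par v) = D v - 1"
proof -
  let ?c = "center v"
  have ex: "\<exists>u. {u,v} \<in> E \<and> reach (D v - 1) ?c u \<and> Dist ?c u = D v - 1"
    using Dist_pred[OF D_reach[OF v]] d unfolding D_def by (simp add: insert_commute)
  have u: "{par v,v} \<in> E" "reach (D v - 1) ?c (par v)" "Dist ?c (par v) = D v - 1"
    using someI_ex[OF ex] unfolding par_def[symmetric] by auto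
  show "{par v, v} \<in> E" using u by simp
  show uV: "par v \<in> V" using edge_V[OF u(1)] by simp
  have cS: "?c \<in> S" using center_S[OF v] .
  show cu: "center (par v) = ?c"
  proof (rule center_eqI[OF uV])
    show "?c \<in> Cands (par v)" using cS u(2) unfolding Cands_def by blast
    fix c' assume c': "c' \<in> Cands (par v)"
    show "key ?c (par v) \<le> key c' (par v)"
    proof (rule ccontr)
      assume lt: "\<not> ?thesis"
      have c'S: "c' \<in> S" using c' unfolding Cands_def by blast
      have rc': "reach (Dist c' (par v)) c' (par v)" using c' Dist_reach unfolding Cands_def by blast
      have rv: "reach (Suc (Dist c' (par v))) c' v" using reach_step[OF rc' u(1)] .
      then have c'v: "c' \<in> Cands v" using c'S unfolding Cands_def by blast
      have "Dist c' v \<le> Suc (Dist c' (par v))" using Dist_le[OF rv] .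
      then have "Dist c' v * M \<le> Suc (Dist c' (par v)) * M" by (rule mult_le_mono1)
      then have "key c' v \<le> key c' (par v) + M" unfolding key_def by simp
      also have "\<dots> < key ?c (par v) + M" using lt by simp
      also have "\<dots> = key ?c v"
      proof -
        obtain j where j: "Dist ?c v = Suc j" using d unfolding D_def by (cases "Dist ?c v") auto
        show ?thesis unfolding key_def using u(3) j unfolding D_def by simp
      qed
      finally show False using center_props(2)[OF v c'v] by simp
    qed
  qed
  show "D (par v) = D v - 1" unfolding D_def using cu u(3) unfolding D_def by simp
qed

lemma center_in_X: "v \<in> V \<Longrightarrow> v \<in> X (center v)" unfolding X_def by simp

lemma chain_ex:
  assumes "v \<in> V"
  shows "\<exists>xs. length xs = Suc (D v) \<and> (\<forall>i\<le>D v. xs!i \<in> V \<and> center (xs!i) = center v \<and> D (xs!i) = D v - i)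
     \<and> (\<forall>i<D v. xs ! Suc i = par (xs!i)) \<and> hd xs = v \<and> last xs = center v"
  using assms
proof (induction "D v" arbitrary: v)
  case 0
  then show ?case using D0[of v] by (intro exI[of _ "[v]"]) auto
next
  case (Suc k)
  have d: "D v > 0" using Suc(2) by simp
  note pp = par_props[OF Suc(3) d]
  obtain ys where ys: "length ys = Suc (D (par v))"
    "\<forall>i\<le>D (par v). ys!i \<in> V \<and> center (ys!i) = center (par v) \<and> D (ys!i) = D (par v) - i"
    "\<forall>i<D (par v). ys ! Suc i = par (ys!i)" "hd ys = par v" "last ys = center (par v)"
  proof -
    have "k = D (par v)" using pp(4) Suc(2) by simp
    from Suc(1)[OF this pp(2)] show ?thesis using that by blast
  qed
  have ys0: "ys ! 0 = par v" using ys(1,4) hd_conv_nth[of ys] by fastforce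
  show ?case
  proof (intro exI[of _ "v # ys"] conjI allI impI)
    show "length (v # ys) = Suc (D v)" using ys(1) pp(4) d by simp
    fix i assume i: "i \<le> D v"
    show "(v # ys) ! i \<in> V" "center ((v # ys) ! i) = center v" "D ((v # ys) ! i) = D v - i"
      using ys(2)[rule_format, of "i - 1"] i Suc(3) pp by (cases i; auto)+
  next
    fix i assume i: "i < D v"
    show "(v # ys) ! Suc i = par ((v # ys) ! i)"
      using ys(3)[rule_format, of "i - 1"] i ys0 pp(4) by (cases i) auto
  next
    show "hd (v # ys) = v" by simp
    show "last (v # ys) = center v" using ys(5) pp(3) ys(1) by auto
  qed
qed

end


lemma last_join: "ys \<noteq> [] \<Longrightarrow> last xs = hd ys \<Longrightarrow> xs \<noteq> [] \<Longrightarrow> last (xs @ tl ys) = last ys"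
  by (cases ys) auto

context clus begin

definition "chain v = (SOME xs. length xs = Suc (D v) \<and> (\<forall>i\<le>D v. xs!i \<in> V \<and> center (xs!i) = center v \<and> D (xs!i) = D v - i)
     \<and> (\<forall>i<D v. xs ! Suc i = par (xs!i)) \<and> hd xs = v \<and> last xs = center v)"

lemma chain: assumes "v \<in> V"
  shows "length (chain v) = Suc (D v)" "\<And>i. i \<le> D v \<Longrightarrow> chain v ! i \<in> V \<and> center (chain v ! i) = center v \<and> D (chain v ! i) = D v - i"
     "\<And>i. i < D v \<Longrightarrow> chain v ! Suc i = par (chain v ! i)" "hd (chain v) = v" "last (chain v) = center v"
  using someI_ex[OF chain_ex[OF assms]] unfolding chain_def[symmetric] by auto

lemma D_center: "c \<in> S \<Longrightarrow> D c = 0"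
  unfolding D_def using center_self[of c] Dist_le[OF reach0[of c]] SV by auto

lemma chain_len_ne: "v \<in> V \<Longrightarrow> chain v \<noteq> []"
  using chain(1) by fastforce

lemma X_V: "X c \<subseteq> V" unfolding X_def by auto

lemma TE_form: "e \<in> TE c \<Longrightarrow> \<exists>w. e = {w, par w} \<and> w \<in> X c \<and> w \<noteq> c \<and> D w > 0 \<and> par w \<in> X c \<and> {par w, w} \<in> E
   \<and> D (par w) = D w - 1"
proof -
  assume "e \<in> TE c"
  then obtain w where w: "e = {w, par w}" "w \<in> X c" "w \<noteq> c" unfolding TE_def by blast
  have wV: "w \<in> V" and cw: "center w = c" using w(2) unfolding X_def by auto
  have "D w > 0" using D0[OF wV] cw w(3) by (cases "D w") auto
  with par_props[OF wV this] show ?thesis using w wV cw unfolding X_def by auto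
qed

lemma TE_E: "TE c \<subseteq> E"
  using TE_form by (fastforce simp: insert_commute)

lemma chain_X: "v \<in> V \<Longrightarrow> set (chain v) \<subseteq> X (center v)"
  using chain[of v] unfolding X_def by (auto simp: in_set_conv_nth)

lemma chain_distinct: assumes v: "v \<in> V" shows "distinct (chain v)"
proof -
  have "\<And>i j. i < length (chain v) \<Longrightarrow> j < length (chain v) \<Longrightarrow> chain v ! i = chain v ! j \<Longrightarrow> i = j"
  proof -
    fix i j assume "i < length (chain v)" "j < length (chain v)" "chain v ! i = chain v ! j"
    then show "i = j" using chain(2)[OF v, of i] chain(2)[OF v, of j] chain(1)[OF v] by auto
  qed
  then show ?thesis unfolding distinct_conv_nth by blast
qed

lemma chain_wk: assumes v: "v \<in> V" shows "wk (TE (center v)) (chain v)"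
  unfolding wk_nth
proof (intro allI impI)
  fix i assume i: "Suc i < length (chain v)"
  then have iD: "i < D v" using chain(1)[OF v] by simp
  let ?w = "chain v ! i"
  have w: "?w \<in> V" "center ?w = center v" "D ?w = D v - i" using chain(2)[OF v, of i] iD by auto
  have "?w \<noteq> center v"
  proof
    assume "?w = center v"
    then have "D ?w = 0" using D_center center_S[OF v] by simp
    then show False using w(3) iD by simp
  qed
  then have "{?w, par ?w} \<in> TE (center v)" unfolding TE_def X_def using w by blast
  then show "{chain v ! i, chain v ! Suc i} \<in> TE (center v)" using chain(3)[OF v iD] by simp
qed

lemma wf_T: "wf_graph (X c, TE c)"
  unfolding wf_graph_def
proof (intro conjI ballI)
  show "finite (fst (X c, TE c))" using finite_subset[OF X_V finV] by simp
  fix e assume "e \<in> snd (X c, TE c)"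
  then obtain w where w: "e = {w, par w}" "w \<in> X c" "par w \<in> X c" "{par w, w} \<in> E" using TE_form by auto
  show "\<exists>x y. x \<in> fst (X c, TE c) \<and> y \<in> fst (X c, TE c) \<and> x \<noteq> y \<and> e = {x, y}"
    using w edge_ne[OF w(4)] by auto
qed

lemma TE_dir: assumes "{x,y} \<in> TE c" "D y \<le> D x" shows "y = par x" "D x > 0"
proof -
  obtain w where w: "{x,y} = {w, par w}" "D w > 0" "D (par w) = D w - 1" using TE_form[OF assms(1)] by blast
  have "w = x \<and> par w = y \<or> w = y \<and> par w = x" using w(1) by (auto simp: doubleton_eq_iff)
  then show "y = par x" "D x > 0" using w assms(2) by auto
qed

lemma T_connected: assumes c: "c \<in> S" shows "connected_graph (X c, TE c)"
  unfolding connected_graph_def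
proof (intro ballI)
  fix x y assume x: "x \<in> fst (X c, TE c)" and y: "y \<in> fst (X c, TE c)"
  have xV: "x \<in> V" "center x = c" and yV: "y \<in> V" "center y = c" using x y unfolding X_def by auto
  define W where "W = chain x @ tl (rev (chain y))"
  have w1: "wk (TE c) (chain x)" using chain_wk[OF xV(1)] xV(2) by simp
  have w2: "wk (TE c) (rev (chain y))" using chain_wk[OF yV(1)] yV(2) by (simp add: wk_rev)
  have n2: "rev (chain y) \<noteq> []" using chain_len_ne[OF yV(1)] by simp
  have j: "last (chain x) = hd (rev (chain y))" using chain(5)[OF xV(1)] chain(5)[OF yV(1)] xV(2) yV(2)
    by (simp add: hd_rev)
  have wW: "wk (TE c) W" unfolding W_def using wk_join[OF w1 w2 n2 chain_len_ne[OF xV(1)] j] .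
  have Wne: "W \<noteq> []" unfolding W_def using chain_len_ne[OF xV(1)] by simp
  have hW: "hd W = x" unfolding W_def using chain_len_ne[OF xV(1)] chain(4)[OF xV(1)] by simp
  have lW: "last W = y" unfolding W_def
    using last_join[of "rev (chain y)" "chain x"] chain_len_ne[OF xV(1)] chain_len_ne[OF yV(1)]
      chain(5)[OF xV(1)] chain(5)[OF yV(1)] chain(4)[OF yV(1)] xV(2) yV(2)
    by (simp add: hd_rev last_rev)
  have sW: "set W \<subseteq> X c" unfolding W_def using chain_X[OF xV(1)] chain_X[OF yV(1)] xV(2) yV(2)
    by (auto dest: list.set_sel(2)[rotated] simp: set_rev) (metis list.sel(2) list.set_sel(2) set_rev subsetD)
  obtain ys where ys: "wk (TE c) ys \<and> distinct ys \<and> ys \<noteq> [] \<and> hd ys = hd W \<and> last ys = last W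
          \<and> set ys \<subseteq> set W \<and> length ys \<le> length W" using walk_to_path[OF wW Wne] by blast
  show "\<exists>xs. is_path (X c, TE c) xs \<and> hd xs = x \<and> last xs = y"
    using ys hW lW sW unfolding is_path_wk by (intro exI[of _ ys]) auto
qed

lemma T_acyclic: assumes c: "c \<in> S" shows "\<not> (\<exists>xs. is_cycle (X c, TE c) xs)"
proof
  assume "\<exists>xs. is_cycle (X c, TE c) xs"
  then obtain cyc where cy: "is_cycle (X c, TE c) cyc" by blast
  define n where "n = length cyc"
  have n3: "n \<ge> 3" and dc: "distinct cyc" and wc: "wk (TE c) cyc" and lh: "{last cyc, hd cyc} \<in> TE c"
    and sc: "set cyc \<subseteq> X c"
    using cy unfolding is_cycle_def is_path_wk n_def by auto
  have succ: "{cyc ! j, cyc ! ((j+1) mod n)} \<in> TE c" if j: "j < n" for j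
  proof (cases "Suc j < n")
    case True then show ?thesis using wc unfolding wk_nth n_def by simp
  next
    case False
    then have "j = n - 1" using j by simp
    moreover have "cyc \<noteq> []" using n3 unfolding n_def by auto
    then have "last cyc = cyc ! (n - 1)" "hd cyc = cyc ! 0" unfolding n_def
      by (auto simp: last_conv_nth hd_conv_nth)
    ultimately show ?thesis using lh n3 by simp
  qed
  have "finite (D ` set cyc)" by simp
  moreover have "set cyc \<noteq> {}" using n3 unfolding n_def by auto
  ultimately have "Max (D ` set cyc) \<in> D ` set cyc" using Max_in by blast
  then obtain x where x: "x \<in> set cyc" "D x = Max (D ` set cyc)" by auto
  then obtain i where i: "i < n" "cyc ! i = x" unfolding n_def by (metis in_set_conv_nth)
  have mx: "D (cyc ! j) \<le> D (cyc ! i)" if "j < n" for j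
    using that i x n3 unfolding n_def by simp
  define a where "a = (i+1) mod n"
  define b where "b = (i+n-1) mod n"
  have an: "a < n" "b < n" unfolding a_def b_def using n3 by auto
  have bsucc: "(b + 1) mod n = i"
  proof (cases "i = 0")
    case True then show ?thesis unfolding b_def using n3 by simp
  next
    case False
    then have "(i+n-1) mod n = i - 1" using i(1) by (simp add: mod_if)
    then show ?thesis unfolding b_def using False i(1) by simp
  qed
  have ab: "a \<noteq> b"
  proof (cases "i = 0")
    case True then show ?thesis unfolding a_def b_def using n3 by simp
  next
    case False
    show ?thesis
    proof (cases "i = n - 1")
      case True then show ?thesis unfolding a_def b_def using n3 by (simp add: mod_if)
    next
      case False2: False
      have "a = i + 1" unfolding a_def using i(1) False2 by simp
      moreover have "b = i - 1" unfolding b_def using i(1) False by (simp add: mod_if)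
      ultimately show ?thesis using False by simp
    qed
  qed
  have e1: "{cyc ! i, cyc ! a} \<in> TE c" using succ[OF i(1)] unfolding a_def by simp
  have e2: "{cyc ! i, cyc ! b} \<in> TE c" using succ[OF an(2)] bsucc by (simp add: insert_commute)
  have "cyc ! a = par (cyc ! i)" using TE_dir(1)[OF e1 mx[OF an(1)]] .
  moreover have "cyc ! b = par (cyc ! i)" using TE_dir(1)[OF e2 mx[OF an(2)]] .
  ultimately have "cyc ! a = cyc ! b" by simp
  then show False using dc an ab unfolding n_def by (simp add: nth_eq_iff_index_eq)
qed

lemma T_radius: assumes c: "c \<in> S" and P: "is_path (X c, TE c) xs" and h: "hd xs = c"
  shows "length xs - 1 \<le> 2 * R"
proof -
  have dx: "distinct xs" and wx: "wk (TE c) xs" and sx: "set xs \<subseteq> X c" and ne: "xs \<noteq> []"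
    using P unfolding is_path_wk by auto
  have x0: "xs ! 0 = c" using h ne by (simp add: hd_conv_nth)
  have claim: "D (xs ! i) = i \<and> (i > 0 \<longrightarrow> par (xs ! i) = xs ! (i - 1))" if "i < length xs" for i
    using that
  proof (induction i)
    case 0 then show ?case using x0 D_center[OF c] by simp
  next
    case (Suc i)
    have e: "{xs ! i, xs ! Suc i} \<in> TE c" using wx Suc(2) unfolding wk_nth by simp
    obtain w where w: "{xs ! i, xs ! Suc i} = {w, par w}" "w \<noteq> c" "D w > 0" "D (par w) = D w - 1"
      using TE_form[OF e] by blast
    have IH: "D (xs ! i) = i" "i > 0 \<Longrightarrow> par (xs ! i) = xs ! (i - 1)" using Suc by auto
    have ne1: "xs ! Suc i \<noteq> xs ! i" "i > 0 \<Longrightarrow> xs ! Suc i \<noteq> xs ! (i - 1)"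
      using dx Suc(2) by (auto simp: nth_eq_iff_index_eq)
    have "w = xs ! Suc i \<and> par w = xs ! i"
    proof (cases "w = xs ! i")
      case True
      then have pw: "par w = xs ! Suc i" using w(1) ne1(1) by (auto simp: doubleton_eq_iff)
      show ?thesis
      proof (cases "i = 0")
        case True
        then show ?thesis using \<open>w = xs ! i\<close> x0 w(2) by simp
      next
        case False
        then show ?thesis using IH(2) pw \<open>w = xs ! i\<close> ne1(2) by simp
      qed
    next
      case False
      then show ?thesis using w(1) by (auto simp: doubleton_eq_iff)
    qed
    then show ?case using w IH by auto
  qed
  have "D (last xs) \<le> 2 * R" using D_le sx ne X_V by (meson last_in_set subsetD)
  moreover have "D (last xs) = length xs - 1" using claim[of "length xs - 1"] ne by (simp add: last_conv_nth)
  ultimately show ?thesis by simp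
qed

end


context clus begin

lemma tw: assumes x: "x \<in> X c" and y: "y \<in> X c"
  shows "wk (TE c) (chain x @ tl (rev (chain y)))" "chain x @ tl (rev (chain y)) \<noteq> []"
    "hd (chain x @ tl (rev (chain y))) = x" "last (chain x @ tl (rev (chain y))) = y"
    "set (chain x @ tl (rev (chain y))) \<subseteq> V"
    "length (chain x @ tl (rev (chain y))) \<le> 4 * R + 1"
proof -
  have xV: "x \<in> V" "center x = c" and yV: "y \<in> V" "center y = c" using x y unfolding X_def by auto
  have w1: "wk (TE c) (chain x)" using chain_wk[OF xV(1)] xV(2) by simp
  have w2: "wk (TE c) (rev (chain y))" using chain_wk[OF yV(1)] yV(2) by (simp add: wk_rev)
  have n2: "rev (chain y) \<noteq> []" using chain_len_ne[OF yV(1)] by simp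
  have j: "last (chain x) = hd (rev (chain y))" using chain(5)[OF xV(1)] chain(5)[OF yV(1)] xV(2) yV(2)
    by (simp add: hd_rev)
  show "wk (TE c) (chain x @ tl (rev (chain y)))" using wk_join[OF w1 w2 n2 chain_len_ne[OF xV(1)] j] .
  show "chain x @ tl (rev (chain y)) \<noteq> []" using chain_len_ne[OF xV(1)] by simp
  show "hd (chain x @ tl (rev (chain y))) = x" using chain_len_ne[OF xV(1)] chain(4)[OF xV(1)] by simp
  show "last (chain x @ tl (rev (chain y))) = y"
    using last_join[OF n2 j chain_len_ne[OF xV(1)]] chain(4)[OF yV(1)] chain_len_ne[OF yV(1)]
    by (simp add: last_rev)
  have "set (tl (rev (chain y))) \<subseteq> set (chain y)" by (metis list.set_sel(2) set_rev subsetI tl_Nil)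
  moreover have "X (center x) \<subseteq> V" "X (center y) \<subseteq> V" using X_V by blast+
  ultimately show "set (chain x @ tl (rev (chain y))) \<subseteq> V" using chain_X[OF xV(1)] chain_X[OF yV(1)] by auto
  show "length (chain x @ tl (rev (chain y))) \<le> 4 * R + 1"
    using chain(1)[OF xV(1)] chain(1)[OF yV(1)] D_le[OF xV(1)] D_le[OF yV(1)] by simp
qed

lemma TE_other: assumes "center a \<noteq> center b" shows "{a,b} \<notin> TE c"
proof
  assume "{a,b} \<in> TE c"
  then obtain w where w: "{a,b} = {w, par w}" "w \<in> X c" "par w \<in> X c" using TE_form by blast
  then have "center a = c" "center b = c" unfolding X_def by (auto simp: doubleton_eq_iff)
  then show False using assms by simp
qed

lemma edge_unique:
  assumes e1: "{x1,y1} \<in> E" and e2: "{x2,y2} \<in> E" and cx: "center x1 = center x2"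
    and cy: "center y1 = center y2" and cxy: "center x1 \<noteq> center y1"
  shows "{x1,y1} = {x2,y2}"
proof (rule ccontr)
  assume ne: "{x1,y1} \<noteq> {x2,y2}"
  let ?u = "center x1" and ?v = "center y1"
  have V: "x1 \<in> V" "y1 \<in> V" "x2 \<in> V" "y2 \<in> V" using edge_V e1 e2 by auto
  have X: "x1 \<in> X ?u" "x2 \<in> X ?u" "y1 \<in> X ?v" "y2 \<in> X ?v" using V cx cy unfolding X_def by auto
  define A where "A = chain x1 @ tl (rev (chain x2))"
  define B where "B = chain y2 @ tl (rev (chain y1))"
  note tA = tw[OF X(1) X(2), folded A_def] and tB = tw[OF X(4) X(3), folded B_def]
  let ?F = "E - {{x1,y1}}"
  have TF: "TE ?u \<subseteq> ?F" "TE ?v \<subseteq> ?F" using TE_E TE_other[OF cxy] by blast+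
  have "wk ?F (A @ B)" unfolding wk_append
    using wk_mono[OF tA(1) TF(1)] wk_mono[OF tB(1) TF(2)] tA(4) tB(3) e2 ne by auto
  moreover have "length (A @ B) \<le> 8 * R + 2" using tA(6) tB(6) by simp
  moreover have "hd (A @ B) = x1" "last (A @ B) = y1" "A @ B \<noteq> []" "set (A @ B) \<subseteq> V"
    using tA tB by auto
  ultimately obtain cyc where "is_cycle (V,E) cyc" "length cyc \<le> 8 * R + 2"
    using cycle_from_walk[of x1 y1 "(V,E)" "A @ B"] edge_ne[OF e1] e1 by fastforce
  then show False using girth gR by fastforce
qed

definition "Exits c = {e \<in> E. \<exists>a b. e = {a,b} \<and> a \<in> X c \<and> b \<notin> X c}"

lemma far_end: assumes c: "c \<in> S" and P: "P \<in> Pth c (2*R+1)" shows "last P \<notin> X c"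
proof
  assume l: "last P \<in> X c"
  have Pp: "is_path (V,E) P" "hd P = c" "length P = 2*R+2" using P unfolding Pth_def by auto
  have lV: "last P \<in> V" "center (last P) = c" using l unfolding X_def by auto
  obtain Q where Q: "is_path (V,E) Q" "hd Q = c" "last Q = last P" "length Q \<le> Suc (D (last P))"
    using reach_path[OF D_reach[OF lV(1)]] lV(2) by auto
  have "length Q \<le> 2*R+1" using Q(4) D_le[OF lV(1)] by simp
  then have "P \<noteq> Q" using Pp(3) by auto
  then obtain cyc where "is_cycle (V,E) cyc" "length cyc + 2 \<le> length P + length Q"
    using path_unique[OF Pp(1) Q(1)] Pp(2) Q(2,3) by metis
  then show False using girth[of cyc] Pp(3) \<open>length Q \<le> 2*R+1\<close> gR by linarith
qed

lemma in_X_prefix: assumes c: "c \<in> S" and P: "P \<in> Pth c r" and j: "j < length P" "j \<le> R"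
  shows "P ! j \<in> X c"
proof -
  have Pp: "is_path (V,E) P" "hd P = c" using P unfolding Pth_def by auto
  have tp: "is_path (V,E) (take (Suc j) P)" using path_take[OF Pp(1)] by simp
  have "reach (length (take (Suc j) P) - 1) (hd (take (Suc j) P)) (last (take (Suc j) P))"
    by (rule path_reach[OF tp])
  moreover have "length (take (Suc j) P) - 1 = j" using j by simp
  moreover have "hd (take (Suc j) P) = c" using Pp(2) j by (simp add: hd_take)
  moreover have "last (take (Suc j) P) = P ! j" using j by (simp add: take_Suc_conv_app_nth)
  ultimately have r: "reach j c (P ! j)" by simp
  have "center (P ! j) = c" using ball[OF c r j(2)] .
  moreover have "P ! j \<in> V" using reachV[OF r] by simp
  ultimately show ?thesis unfolding X_def by simp
qed

lemma exits_count: assumes c: "c \<in> S" shows "card (Pth c (R+1)) \<le> card (Exits c)"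
proof -
  define ext where "ext Q = (SOME P. P \<in> Pth c (2*R+1) \<and> take (R+2) P = Q)" for Q
  have ext: "ext Q \<in> Pth c (2*R+1) \<and> take (R+2) (ext Q) = Q" if "Q \<in> Pth c (R+1)" for Q
  proof -
    have "\<exists>P \<in> Pth c (R+1 + R). take (Suc (R+1)) P = Q" using ext_any[OF that, of R] gR by simp
    then have "\<exists>P. P \<in> Pth c (2*R+1) \<and> take (R+2) P = Q" by (auto simp: mult_2 add.commute add.left_commute)
    then show ?thesis unfolding ext_def by (rule someI_ex)
  qed
  define ix where "ix P = (LEAST i. P ! i \<notin> X c)" for P :: "'a list"
  define ee where "ee Q = {ext Q ! (ix (ext Q) - 1), ext Q ! ix (ext Q)}" for Q
  have key: "ix (ext Q) \<le> 2*R+1 \<and> ix (ext Q) \<ge> R+1 \<and> ext Q ! ix (ext Q) \<notin> X c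
     \<and> ext Q ! (ix (ext Q) - 1) \<in> X c \<and> ee Q \<in> E" if Q: "Q \<in> Pth c (R+1)" for Q
  proof -
    let ?P = "ext Q"
    have PP: "?P \<in> Pth c (2*R+1)" using ext[OF Q] by simp
    have Pp: "is_path (V,E) ?P" "length ?P = 2*R+2" using PP unfolding Pth_def by auto
    have lastP: "?P ! (2*R+1) \<notin> X c" using far_end[OF c PP] Pp(2) last_conv_nth[of ?P] by fastforce
    then have ex: "\<exists>i. ?P ! i \<notin> X c" by blast
    have i1: "?P ! ix ?P \<notin> X c" using LeastI_ex[OF ex] unfolding ix_def by simp
    have i2: "ix ?P \<le> 2*R+1" using Least_le[of "\<lambda>i. ?P ! i \<notin> X c", OF lastP] unfolding ix_def by simp
    have i3: "ix ?P \<ge> R+1"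
    proof (rule ccontr)
      assume "\<not> ?thesis"
      then have "ix ?P \<le> R" by simp
      then have "?P ! ix ?P \<in> X c" using in_X_prefix[OF c PP] Pp(2) by simp
      then show False using i1 by simp
    qed
    have i4: "?P ! (ix ?P - 1) \<in> X c"
    proof -
      have "ix ?P - 1 < ix ?P" using i3 by simp
      then have "\<not> (?P ! (ix ?P - 1) \<notin> X c)" using not_less_Least unfolding ix_def by blast
      then show ?thesis by simp
    qed
    have "\<forall>i<Suc (2 * R). {?P ! i, ?P ! Suc i} \<in> E" using Pp unfolding is_path_def by simp
    moreover have "ix ?P - 1 < Suc (2*R)" using i2 i3 by simp
    ultimately have "{?P ! (ix ?P - 1), ?P ! Suc (ix ?P - 1)} \<in> E" by blast
    then have "ee Q \<in> E" unfolding ee_def using i3 by simp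
    then show ?thesis using i1 i2 i3 i4 by simp
  qed
  have "inj_on ee (Pth c (R+1))"
  proof (rule inj_onI)
    fix Q1 Q2 assume Q1: "Q1 \<in> Pth c (R+1)" and Q2: "Q2 \<in> Pth c (R+1)" and eq: "ee Q1 = ee Q2"
    let ?P1 = "ext Q1" and ?P2 = "ext Q2" and ?i1 = "ix (ext Q1)" and ?i2 = "ix (ext Q2)"
    note k1 = key[OF Q1] and k2 = key[OF Q2]
    have b: "?P1 ! ?i1 = ?P2 ! ?i2" using eq k1 k2 unfolding ee_def by (auto simp: doubleton_eq_iff)
    have PP1: "is_path (V,E) ?P1" "hd ?P1 = c" "length ?P1 = 2*R+2" using ext[OF Q1] unfolding Pth_def by auto
    have PP2: "is_path (V,E) ?P2" "hd ?P2 = c" "length ?P2 = 2*R+2" using ext[OF Q2] unfolding Pth_def by auto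
    define A1 where "A1 = take (Suc ?i1) ?P1"
    define A2 where "A2 = take (Suc ?i2) ?P2"
    have A1: "is_path (V,E) A1" "hd A1 = c" "last A1 = ?P1 ! ?i1" "length A1 \<le> 2*R+2"
    proof -
      show "is_path (V,E) A1" unfolding A1_def using path_take[OF PP1(1)] by simp
      show "hd A1 = c" unfolding A1_def using PP1 by (simp add: hd_take)
      show "last A1 = ?P1 ! ?i1" unfolding A1_def using PP1(3) k1 by (simp add: take_Suc_conv_app_nth)
      show "length A1 \<le> 2*R+2" unfolding A1_def using PP1(3) by simp
    qed
    have A2: "is_path (V,E) A2" "hd A2 = c" "last A2 = ?P2 ! ?i2" "length A2 \<le> 2*R+2"
    proof -
      show "is_path (V,E) A2" unfolding A2_def using path_take[OF PP2(1)] by simp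
      show "hd A2 = c" unfolding A2_def using PP2 by (simp add: hd_take)
      show "last A2 = ?P2 ! ?i2" unfolding A2_def using PP2(3) k2 by (simp add: take_Suc_conv_app_nth)
      show "length A2 \<le> 2*R+2" unfolding A2_def using PP2(3) by simp
    qed
    have "A1 = A2"
    proof (rule ccontr)
      assume "A1 \<noteq> A2"
      then obtain cyc where "is_cycle (V,E) cyc" "length cyc + 2 \<le> length A1 + length A2"
        using path_unique[OF A1(1) A2(1)] A1(2,3) A2(2,3) b by metis
      then show False using girth[of cyc] A1(4) A2(4) gR by linarith
    qed
    then have "take (R+2) A1 = take (R+2) A2" by simp
    moreover have "take (R+2) A1 = Q1" unfolding A1_def using ext[OF Q1] k1 by (simp add: min_def)
    moreover have "take (R+2) A2 = Q2" unfolding A2_def using ext[OF Q2] k2 by (simp add: min_def)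
    ultimately show "Q1 = Q2" by simp
  qed
  moreover have "ee ` Pth c (R+1) \<subseteq> Exits c"
  proof
    fix e assume "e \<in> ee ` Pth c (R+1)"
    then obtain Q where Q: "Q \<in> Pth c (R+1)" "e = ee Q" by blast
    show "e \<in> Exits c" unfolding Exits_def using key[OF Q(1)] Q(2) unfolding ee_def by blast
  qed
  moreover have "finite (Exits c)" unfolding Exits_def using finE by simp
  ultimately show ?thesis using card_inj_on_le by blast
qed

end


context clus begin

definition "EH = {center ` e | e. e \<in> E \<and> (\<exists>a b. e = {a,b} \<and> center a \<noteq> center b)}"

lemma EH_form: "h \<in> EH \<Longrightarrow> \<exists>a b. {a,b} \<in> E \<and> center a \<noteq> center b \<and> h = {center a, center b}"
  unfolding EH_def by auto

lemma EH_sub: "EH \<subseteq> Pow S"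
  using EH_form edge_V center_S by blast

lemma EH_finite: "finite EH"
  using finite_subset[OF EH_sub] finite_subset[OF SV finV] by blast

lemma EH_count: "card S * 2 ^ ((R+1) div p) \<le> 2 * card EH"
proof -
  define eh where "eh h = (SOME e. e \<in> E \<and> center ` e = h \<and> (\<exists>a b. e = {a,b} \<and> center a \<noteq> center b))" for h
  have eh: "eh h \<in> E \<and> center ` (eh h) = h \<and> (\<exists>a b. eh h = {a,b} \<and> center a \<noteq> center b)" if "h \<in> EH" for h
  proof -
    have "\<exists>e. e \<in> E \<and> center ` e = h \<and> (\<exists>a b. e = {a,b} \<and> center a \<noteq> center b)"
      using that unfolding EH_def by blast
    then show ?thesis unfolding eh_def by (rule someI_ex)
  qed
  have finS: "finite S" using finite_subset[OF SV finV] .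
  have "card S * 2 ^ ((R+1) div p) = (\<Sum>c\<in>S. 2 ^ ((R+1) div p))" by simp
  also have "\<dots> \<le> (\<Sum>c\<in>S. card (Exits c))"
  proof (rule sum_mono)
    fix c assume c: "c \<in> S"
    have "2 ^ ((R+1) div p) \<le> card (Pth c (R+1))" using N_pow[of c "R+1"] c SV gR by auto
    also have "\<dots> \<le> card (Exits c)" using exits_count[OF c] .
    finally show "2 ^ ((R+1) div p) \<le> card (Exits c)" .
  qed
  also have "\<dots> = card (Sigma S Exits)"
    using card_SigmaI[OF finS, of Exits] finE unfolding Exits_def by simp
  also have "\<dots> \<le> card (\<Union>h\<in>EH. h \<times> {eh h})"
  proof (rule card_mono)
    show "finite (\<Union>h\<in>EH. h \<times> {eh h})" using EH_finite EH_sub finite_subset[OF SV finV]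
      by (auto intro!: finite_UN_I dest: finite_subset)
    show "Sigma S Exits \<subseteq> (\<Union>h\<in>EH. h \<times> {eh h})"
    proof
      fix ce assume "ce \<in> Sigma S Exits"
      then obtain c e where ce: "ce = (c,e)" "c \<in> S" "e \<in> Exits c" by blast
      then obtain a b where ab: "e = {a,b}" "a \<in> X c" "b \<notin> X c" "e \<in> E" unfolding Exits_def by blast
      have bV: "b \<in> V" using edge_V ab by blast
      have ca: "center a = c" using ab unfolding X_def by simp
      have cb: "center b \<noteq> c" using ab bV unfolding X_def by simp
      define h where "h = center ` e"
      have hEH: "h \<in> EH" unfolding EH_def h_def using ab ca cb by blast
      have h2: "h = {c, center b}" unfolding h_def ab(1) using ca by simp
      obtain a' b' where ab': "eh h = {a',b'}" "center a' \<noteq> center b'" "eh h \<in> E" "center ` (eh h) = h"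
        using eh[OF hEH] by blast
      have "{center a', center b'} = {c, center b}" using ab'(1,4) h2 by simp
      then have "center a' = c \<and> center b' = center b \<or> center a' = center b \<and> center b' = c"
        by (auto simp: doubleton_eq_iff)
      then have "eh h = e"
      proof
        assume "center a' = c \<and> center b' = center b"
        then show ?thesis using edge_unique[of a b a' b'] ab ab' ca cb by auto
      next
        assume "center a' = center b \<and> center b' = c"
        then have "{a,b} = {b',a'}" using edge_unique[of a b b' a'] ab ab' ca cb by (auto simp: insert_commute)
        then show ?thesis using ab ab' by (auto simp: insert_commute)
      qed
      moreover have "c \<in> h" using h2 by simp
      ultimately show "ce \<in> (\<Union>h\<in>EH. h \<times> {eh h})" using ce hEH by blast
    qed
  qed
  also have "\<dots> \<le> (\<Sum>h\<in>EH. card (h \<times> {eh h}))" by (rule card_UN_le[OF EH_finite])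
  also have "\<dots> = (\<Sum>h\<in>EH. 2)"
  proof (rule sum.cong)
    fix h assume "h \<in> EH"
    then obtain a b where "h = {center a, center b}" "center a \<noteq> center b" using EH_form by blast
    then show "card (h \<times> {eh h}) = 2" by (simp add: card_cartesian_product)
  qed simp
  also have "\<dots> = 2 * card EH" by simp
  finally show ?thesis .
qed

lemma wf_H: "wf_graph (S, EH)"
  unfolding wf_graph_def using finite_subset[OF SV finV] EH_form edge_V center_S by fastforce

lemma X_disj: "u \<noteq> v \<Longrightarrow> X u \<inter> X v = {}"
  unfolding X_def by auto

lemma minor: assumes G0: "V \<subseteq> fst G0" "E \<subseteq> snd G0"
  shows "shallow_minor (4*R) G0 (S, EH)"
  unfolding shallow_minor_def
proof (intro conjI exI[of _ "\<lambda>c. (X c, TE c)"])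
  show "wf_graph (S, EH)" by (rule wf_H)
  show "fst (S, EH) \<subseteq> fst G0" using SV G0 by simp
  show "\<forall>v\<in>fst (S, EH). subgraph (X v, TE v) G0 \<and> is_tree (X v, TE v) \<and> v \<in> fst (X v, TE v) \<and>
          (\<forall>xs. is_path (X v, TE v) xs \<and> hd xs = v \<longrightarrow> length xs - 1 \<le> (4 * R + 1) div 2)"
  proof (intro ballI conjI allI impI)
    fix v assume "v \<in> fst (S, EH)"
    then have v: "v \<in> S" by simp
    show "subgraph (X v, TE v) G0" unfolding subgraph_def using wf_T X_V TE_E G0 by fastforce
    have vX: "v \<in> X v" unfolding X_def using center_self[OF v] SV v by auto
    show "is_tree (X v, TE v)" unfolding is_tree_def using vX T_connected[OF v] T_acyclic[OF v] by auto
    show "v \<in> fst (X v, TE v)" using vX by simp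
    fix xs assume "is_path (X v, TE v) xs \<and> hd xs = v"
    then have "length xs - 1 \<le> 2 * R" using T_radius[OF v] by blast
    moreover have "(4 * R + 1) div 2 = 2 * R" by simp
    ultimately show "length xs - 1 \<le> (4 * R + 1) div 2" by simp
  qed
  show "\<forall>u\<in>fst (S, EH). \<forall>v\<in>fst (S, EH). u \<noteq> v \<longrightarrow> fst (X u, TE u) \<inter> fst (X v, TE v) = {}"
    using X_disj by simp
  show "\<forall>u v. {u, v} \<in> snd (S, EH) \<longrightarrow>
        (\<exists>x y. x \<in> fst (X u, TE u) \<and> y \<in> fst (X v, TE v) \<and> {x, y} \<in> snd G0 \<and>
            (\<exists>xs. is_path (fst (X u, TE u) \<union> fst (X v, TE v), snd (X u, TE u) \<union> snd (X v, TE v) \<union> {{x, y}}) xs \<and>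
                  hd xs = u \<and> last xs = v \<and> length xs - 1 \<le> 4 * R + 1))"
  proof (intro allI impI)
    fix u v assume "{u, v} \<in> snd (S, EH)"
    then obtain a b where ab: "{a,b} \<in> E" "center a \<noteq> center b" "{u,v} = {center a, center b}"
      using EH_form by fastforce
    then have "\<exists>x y. {x,y} \<in> E \<and> center x = u \<and> center y = v"
      by (auto simp: doubleton_eq_iff insert_commute) (metis insert_commute)
    then obtain x y where xy: "{x,y} \<in> E" "center x = u" "center y = v" by blast
    have uv: "u \<noteq> v" using ab(2,3) by (auto simp: doubleton_eq_iff)
    have xV: "x \<in> V" and yV: "y \<in> V" using edge_V[OF xy(1)] by auto
    have xX: "x \<in> X u" and yX: "y \<in> X v" using xy xV yV unfolding X_def by auto
    define xs where "xs = rev (chain x) @ chain y"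
    have d: "distinct xs" unfolding xs_def using chain_distinct[OF xV] chain_distinct[OF yV]
      chain_X[OF xV] chain_X[OF yV] xy X_disj[OF uv] by auto
    have st: "set xs \<subseteq> X u \<union> X v" unfolding xs_def using chain_X[OF xV] chain_X[OF yV] xy by auto
    have w: "wk (TE u \<union> TE v \<union> {{x,y}}) xs" unfolding xs_def wk_append
      using wk_mono[OF chain_wk[OF xV], of "TE u \<union> TE v \<union> {{x,y}}"]
        wk_mono[OF chain_wk[OF yV], of "TE u \<union> TE v \<union> {{x,y}}"] xy chain(4)[OF xV] chain(4)[OF yV]
        chain_len_ne[OF xV] chain_len_ne[OF yV]
      by (auto simp: wk_rev last_rev)
    have h: "hd xs = u" unfolding xs_def using chain_len_ne[OF xV] chain(5)[OF xV] xy by (simp add: hd_rev)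
    have l: "last xs = v" unfolding xs_def using chain_len_ne[OF yV] chain(5)[OF yV] xy by simp
    have len: "length xs - 1 \<le> 4 * R + 1" unfolding xs_def
      using chain(1)[OF xV] chain(1)[OF yV] D_le[OF xV] D_le[OF yV] by simp
    have ne: "xs \<noteq> []" unfolding xs_def using chain_len_ne[OF yV] by simp
    have "is_path (X u \<union> X v, TE u \<union> TE v \<union> {{x,y}}) xs" unfolding is_path_wk using d st w ne by simp
    then show "\<exists>x y. x \<in> fst (X u, TE u) \<and> y \<in> fst (X v, TE v) \<and> {x, y} \<in> snd G0 \<and>
            (\<exists>xs. is_path (fst (X u, TE u) \<union> fst (X v, TE v), snd (X u, TE u) \<union> snd (X v, TE v) \<union> {{x, y}}) xs \<and>
                  hd xs = u \<and> last xs = v \<and> length xs - 1 \<le> 4 * R + 1)"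
      using xX yX xy(1) G0 h l len by auto
  qed
qed

end


context irred begin

lemma exists_clus:
  assumes Vne: "V \<noteq> {}" and gR: "8*R + 8 \<le> g"
  shows "\<exists>S f. clus V E p g R S f"
proof -
  obtain f :: "'a \<Rightarrow> nat" where f: "inj_on f V" using finite_imp_inj_to_nat_seg[OF finV] by blast
  define F where "F = {S. S \<subseteq> V \<and> S \<noteq> {} \<and> (\<forall>c\<in>S. \<forall>c'\<in>S. c \<noteq> c' \<longrightarrow> (\<forall>n. reach n c c' \<longrightarrow> n > 2*R))}"
  obtain v0 where v0: "v0 \<in> V" using Vne by blast
  have "{v0} \<in> F" unfolding F_def using v0 by auto
  have finF: "finite F" unfolding F_def using finV by (simp add: finite_subset[of _ "Pow V"] subset_iff)
  have "F \<noteq> {}" using \<open>{v0} \<in> F\<close> by blast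
  then have "Max (card ` F) \<in> card ` F" using finF by simp
  then obtain S where S: "S \<in> F" "card S = Max (card ` F)" by auto
  have Smax: "card T \<le> card S" if "T \<in> F" for T using S(2) finF that by simp
  have SV: "S \<subseteq> V" and Sne: "S \<noteq> {}" and far: "\<And>c c' n. c\<in>S \<Longrightarrow> c'\<in>S \<Longrightarrow> c\<noteq>c' \<Longrightarrow> reach n c c' \<Longrightarrow> n > 2*R"
    using S(1) unfolding F_def by auto
  have cover: "\<exists>c\<in>S. \<exists>n\<le>2*R. reach n c v" if v: "v \<in> V" for v
  proof (rule ccontr)
    assume nc: "\<not> ?thesis"
    have vS: "v \<notin> S" using nc reach0[OF v] by auto
    have "insert v S \<in> F" unfolding F_def
    proof (intro CollectI conjI ballI impI allI)
      show "insert v S \<subseteq> V" using SV v by simp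
      show "insert v S \<noteq> {}" by simp
      fix c c' n assume c: "c \<in> insert v S" and c': "c' \<in> insert v S" and ne: "c \<noteq> c'" and r: "reach n c c'"
      show "2 * R < n"
      proof (cases "c = v")
        case True
        then have "c' \<in> S" using c' ne by simp
        then show ?thesis using nc reach_sym[OF r] True by (meson not_le)
      next
        case False
        then have cS: "c \<in> S" using c by simp
        show ?thesis
        proof (cases "c' = v")
          case True then show ?thesis using nc r cS by (meson not_le)
        next
          case False then show ?thesis using far[OF cS _ ne r] c' by simp
        qed
      qed
    qed
    then have "card (insert v S) \<le> card S" by (rule Smax)
    moreover have "finite S" using finite_subset[OF SV finV] .
    ultimately show False using vS by simp
  qed
  have "clus V E p g R S f"
    by (unfold_locales) (use SV Sne far cover f gR in auto)
  then show ?thesis by blast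
qed

end

lemma nabla_ge:
  assumes w: "wf_graph G" and H: "shallow_minor k G H" "fst H \<noteq> {}"
  shows "real (card (snd H)) / real (card (fst H)) \<le> nabla k G"
proof -
  let ?A = "{real (card (snd H)) / real (card (fst H)) | H. shallow_minor k G H \<and> fst H \<noteq> {}}"
  let ?B = "real (card (Pow (fst G)))"
  have bd: "x \<le> ?B" if "x \<in> insert 0 ?A" for x
  proof -
    have gen: "x \<le> ?B" if H': "shallow_minor k G H'" "fst H' \<noteq> {}" "x = real (card (snd H')) / real (card (fst H'))" for H'
    proof -
      have wH: "wf_graph H'" "fst H' \<subseteq> fst G" using H' unfolding shallow_minor_def by auto
      have "finite (fst H')" using wH unfolding wf_graph_def by simp
      then have c1: "card (fst H') \<ge> 1" using H'(2) by (simp add: Suc_le_eq card_gt_0_iff)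
      have "snd H' \<subseteq> Pow (fst G)" using wH unfolding wf_graph_def by auto
      then have "card (snd H') \<le> card (Pow (fst G))" using w unfolding wf_graph_def by (simp add: card_mono)
      moreover have "real (card (snd H')) / real (card (fst H')) \<le> real (card (snd H')) / 1"
        by (rule divide_left_mono) (use c1 in auto)
      ultimately show "x \<le> ?B" using H'(3) by linarith
    qed
    from that have "x = 0 \<or> x \<in> ?A" by simp
    then show ?thesis
    proof
      assume "x = 0" then show ?thesis by simp
    next
      assume "x \<in> ?A"
      then obtain H' where "shallow_minor k G H'" "fst H' \<noteq> {}" "x = real (card (snd H')) / real (card (fst H'))"
        by blast
      then show ?thesis by (rule gen)
    qed
  qed
  have "bdd_above (insert 0 ?A)" using bd by (meson bdd_aboveI)
  moreover have "real (card (snd H)) / real (card (fst H)) \<in> insert 0 ?A" using H by blast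
  ultimately show ?thesis unfolding nabla_def by (rule cSup_upper[rotated])
qed

lemma girth_le: "enat g \<le> girth G \<Longrightarrow> is_cycle G xs \<Longrightarrow> g \<le> length xs"
proof -
  assume g: "enat g \<le> girth G" and c: "is_cycle G xs"
  have "girth G = enat (LEAST n. \<exists>xs. is_cycle G xs \<and> length xs = n)" using c unfolding girth_def by auto
  moreover have "(LEAST n. \<exists>xs. is_cycle G xs \<and> length xs = n) \<le> length xs" using c by (intro Least_le) blast
  ultimately show ?thesis using g by (metis enat_ord_simps(1) order_trans)
qed

lemma big_minor:
  assumes w: "wf_graph G" and p: "p \<ge> 2" and V': "V' \<subseteq> fst G" "V' \<noteq> {}"
    and irr: "\<not> (\<exists>G''. p_reduction p (V', {e\<in>snd G. e \<subseteq> V'}) G'')"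
    and gi: "\<And>xs. is_cycle G xs \<Longrightarrow> g \<le> length xs" and gR: "8*R + 8 \<le> g"
  shows "2 ^ ((R+1) div p) / 2 \<le> nabla (4*R) G"
proof -
  let ?E = "{e\<in>snd G. e \<subseteq> V'}"
  have cyc: "is_cycle (V', ?E) xs \<Longrightarrow> g \<le> length xs" for xs
  proof -
    assume "is_cycle (V', ?E) xs"
    then have "is_cycle G xs" unfolding is_cycle_def is_path_wk using V'(1) wk_mono[of ?E xs "snd G"] by auto
    then show ?thesis by (rule gi)
  qed
  have "finite (fst G)" using w unfolding wf_graph_def by simp
  then have fin: "finite V'" using finite_subset[OF V'(1)] by simp
  have wfE': "\<forall>e\<in>?E. \<exists>x y. x \<in> V' \<and> y \<in> V' \<and> x \<noteq> y \<and> e = {x, y}"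
  proof
    fix e assume e: "e \<in> ?E"
    have all: "\<forall>e\<in>snd G. \<exists>x y. x \<in> fst G \<and> y \<in> fst G \<and> x \<noteq> y \<and> e = {x,y}"
      using w unfolding wf_graph_def by (rule conjunct2)
    have "e \<in> snd G" "e \<subseteq> V'" using e by auto
    from bspec[OF all this(1)] obtain x y where xy: "x \<noteq> y" "e = {x,y}" by blast
    then have "x \<in> V'" "y \<in> V'" using \<open>e \<subseteq> V'\<close> by auto
    then show "\<exists>x y. x \<in> V' \<and> y \<in> V' \<and> x \<noteq> y \<and> e = {x, y}" using xy by blast
  qed
  have "irred V' ?E p g"
  proof (unfold_locales)
    show "finite V'" by (rule fin)
    show "\<forall>e\<in>?E. \<exists>x y. x \<in> V' \<and> y \<in> V' \<and> x \<noteq> y \<and> e = {x, y}" by (rule wfE')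
    show "\<And>xs. is_cycle (V', ?E) xs \<Longrightarrow> g \<le> length xs" by (rule cyc)
    show "\<not> (\<exists>G''. p_reduction p (V', ?E) G'')" by (rule irr)
    show "2 \<le> p" by (rule p)
  qed
  then interpret I: irred V' ?E p g .
  obtain S f where "clus V' ?E p g R S f" using I.exists_clus[OF V'(2) gR] by blast
  then interpret C: clus V' ?E p g R S f .
  have m: "shallow_minor (4*R) G (S, C.EH)" using C.minor[of G] V' by auto
  have Sne: "fst (S, C.EH) \<noteq> {}" using C.Sne by simp
  have cS: "card S > 0" using C.Sne finite_subset[OF C.SV I.finV] by (simp add: card_gt_0_iff)
  have "card S * 2 ^ ((R+1) div p) \<le> 2 * card C.EH" by (rule C.EH_count)
  then have "real (card S * 2 ^ ((R+1) div p)) \<le> real (2 * card C.EH)" by (simp only: of_nat_le_iff)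
  then have "real (card S) * 2 ^ ((R+1) div p) \<le> 2 * real (card C.EH)" by simp
  then have "2 ^ ((R+1) div p) / 2 \<le> real (card C.EH) / real (card S)"
    using cS by (simp add: field_simps)
  also have "\<dots> \<le> nabla (4*R) G" using nabla_ge[OF w m Sne] by simp
  finally show ?thesis .
qed


lemma arith_final:
  fixes p R :: nat
  assumes p: "p \<ge> 2" and R: "4 * p \<le> R"
  shows "2 powr ((1 / (8 * real p)) * (real (4*R) / 2)) < 2 ^ ((R+1) div p) / 2"
proof -
  define q where "q = (R+1) div p"
  have pp: "p > 0" using p by simp
  have "(4*p) div p \<le> (R+1) div p" using R by (intro div_le_mono) simp
  then have q4: "q \<ge> 4" unfolding q_def using pp by simp
  have "R + 1 = q * p + (R+1) mod p" unfolding q_def by simp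
  moreover have "(R+1) mod p < p" using pp by simp
  ultimately have lt: "R + 1 < (q+1) * p" by (simp add: algebra_simps)
  have e: "(1 / (8 * real p)) * (real (4*R) / 2) = real R / (4 * real p)" using pp by (simp add: field_simps)
  have "real R < real (q+1) * real p" using lt by (metis of_nat_less_iff of_nat_mult add_lessD1)
  then have e2: "real R / (4 * real p) < real (q+1) / 4" using pp by (simp add: field_simps)
  have e3: "real (q+1) / 4 \<le> real q - 1" using q4 by simp
  have "2 powr ((1 / (8 * real p)) * (real (4*R) / 2)) < 2 powr (real (q+1) / 4)"
    unfolding e by (rule powr_less_mono[OF e2]) simp
  also have "\<dots> \<le> 2 powr (real q - 1)" by (rule powr_mono[OF e3]) simp
  also have "\<dots> = 2 ^ q / 2" by (simp add: powr_diff powr_realpow)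
  finally show ?thesis unfolding q_def .
qed

theorem mainTheorem1:
  fixes C :: "'a graph set"
  assumes "\<forall>G\<in>C. wf_graph G"
    and "subexp_expansion C"
  shows "\<forall>p::nat. p \<ge> 2 \<longrightarrow> (\<exists>g::nat. \<forall>G\<in>C. enat g \<le> girth G \<longrightarrow> path_degenerate p G)"
proof (intro allI impI)
  fix p :: nat assume p: "p \<ge> 2"
  define eps :: real where "eps = 1 / (8 * real p)"
  have "eps > 0" using p by (simp add: eps_def)
  then obtain N where N: "\<forall>k\<ge>N. \<forall>G\<in>C. nabla k G \<le> 2 powr (eps * (real k / 2))"
    using assms(2) unfolding subexp_expansion_def by blast
  define R where "R = N + 4 * p"
  define g where "g = 8 * R + 8"
  show "\<exists>g. \<forall>G\<in>C. enat g \<le> girth G \<longrightarrow> path_degenerate p G"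
  proof (intro exI[of _ g] ballI impI)
    fix G assume G: "G \<in> C" "enat g \<le> girth G"
    have w: "wf_graph G" using assms(1) G by blast
    from reduce[OF w p] show "path_degenerate p G"
    proof
      assume "\<exists>V'. V' \<subseteq> fst G \<and> V' \<noteq> {} \<and> \<not> (\<exists>G''. p_reduction p (V', {e\<in>snd G. e \<subseteq> V'}) G'')"
      then obtain V' where V': "V' \<subseteq> fst G" "V' \<noteq> {}" "\<not> (\<exists>G''. p_reduction p (V', {e\<in>snd G. e \<subseteq> V'}) G'')"
        by blast
      have gi: "\<And>xs. is_cycle G xs \<Longrightarrow> g \<le> length xs" using girth_le[OF G(2)] by blast
      have lb: "2 ^ ((R+1) div p) / 2 \<le> nabla (4*R) G"
        using big_minor[OF w p V'(1,2) V'(3) gi] g_def by simp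
      have "4 * R \<ge> N" unfolding R_def by simp
      then have ub: "nabla (4*R) G \<le> 2 powr (eps * (real (4*R) / 2))" using N G(1) by blast
      have "2 powr (eps * (real (4*R) / 2)) < 2 ^ ((R+1) div p) / 2"
        unfolding eps_def by (rule arith_final[OF p]) (simp add: R_def)
      then show ?thesis using lb ub by linarith
    qed
  qed
qed


end
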